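(* Let $\Omega\subset\mathbb{R}^{4p}$ be a region and $F=\sum_{r=0}^{2p}F^r$ a differentiable function on $\Omega$ with components $F^r:\Omega\to\mathbb S^r$. The following are equivalent: (i) $F$ is q-monogenic; (ii) each component $F^r$ is q-monogenic; (iii) each component $F^r$ is simultaneously $\underline\partial$-monogenic and $\underline\partial_{\mathbb J}$-monogenic, i.e. $\underline\partial F^r=0$ and $\underline\partial_{\mathbb J}F^r=0$.
   Context: Coordinates on $\mathbb{R}^{4p}$: $(X_1,\dots,X_{4p})$. $\mathbb{C}_{4p}$ is the complex Clifford algebra generated by $e_1,\dots,e_{4p}$ with $e_\alpha e_\beta+e_\beta e_\alpha=-2\delta_{\alpha\beta}$. Witt basis: $\mathfrak f_k=\tfrac12(-e_{2k-1}+ie_{2k})$, $\mathfrak f_k^\dagger=\tfrac12(e_{2k-1}+ie_{2k})$, $k=1,\dots,2p$. $I=\prod_k\mathfrak f_k\mathfrak f_k^\dagger$, spinor space $\mathbb S=\mathbb C_{4p}I$ with basis $\mathfrak f^\dagger_{j_1}\cdots\mathfrak f^\dagger_{j_r}I$ ($j_1<\dots<j_r$); $\mathbb S^r$ is the span of those with $r$ factors, so $\mathbb S=\bigoplus_{r=0}^{2p}\mathbb S^r$. Real linear maps: $\mathbb{I}(e_{2k-1})=e_{2k}$, $\mathbb{I}(e_{2k})=-e_{2k-1}$; for $j=1,\dots,p$: $\mathbb{J}(e_{4j-3})=e_{4j-1}$, $\mathbb{J}(e_{4j-2})=-e_{4j}$, $\mathbb{J}(e_{4j-1})=-e_{4j-3}$,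 $\mathbb{J}(e_{4j})=e_{4j-2}$; $\mathbb K=\mathbb I\mathbb J$. $\underline\partial=\sum_\alpha e_\alpha\partial_{X_\alpha}$, $\underline\partial_M=\sum_\alpha M(e_\alpha)\partial_{X_\alpha}$ ($M\in\{\mathbb I,\mathbb J,\mathbb K\}$), acting by left multiplication. A function $G$ with values in $\mathbb S$ is q-monogenic if $\underline\partial G=\underline\partial_{\mathbb I}G=\underline\partial_{\mathbb J}G=\underline\partial_{\mathbb K}G=0$. *)

theory Defs
  imports "HOL-Analysis.Analysis"
begin

text \<open>Elements of the complex Clifford algebra C_n (n = 4p) are represented by their
coordinates with respect to the blade basis e_A = e_a1 ... e_ak (a1 < ... < ak),
A a subset of {1..n}: a map from index sets to complex coefficients.
Only subsets of {1..n} are relevant.\<close>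

type_synonym cl = "nat set \<Rightarrow> complex"

definition blades :: "nat \<Rightarrow> nat set set" where
  "blades n = Pow {1..n}"

text \<open>Sign in e_A e_B = sign A B * e_(A symmetric-difference B), using e_i e_i = -1.\<close>
definition blade_sign :: "nat set \<Rightarrow> nat set \<Rightarrow> complex" where
  "blade_sign A B = (-1) ^ card {(a, b). a \<in> A \<and> b \<in> B \<and> b < a} * (-1) ^ card (A \<inter> B)"

definition cl_mult :: "nat \<Rightarrow> cl \<Rightarrow> cl \<Rightarrow> cl" where
  "cl_mult n u v = (\<lambda>C. \<Sum>A\<in>blades n. \<Sum>B\<in>blades n.
      if (A - B) \<union> (B - A) = C then blade_sign A B * u A * v B else 0)"

definition cl_add :: "cl \<Rightarrow> cl \<Rightarrow> cl" where
  "cl_add u v = (\<lambda>A. u A + v A)"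

definition cl_scale :: "complex \<Rightarrow> cl \<Rightarrow> cl" where
  "cl_scale c u = (\<lambda>A. c * u A)"

definition cl_zero :: cl where
  "cl_zero = (\<lambda>A. 0)"

definition cl_one :: cl where
  "cl_one = (\<lambda>A. if A = {} then 1 else 0)"

definition gen :: "nat \<Rightarrow> cl" where
  "gen i = (\<lambda>A. if A = {i} then 1 else 0)"

definition cl_alg :: "nat \<Rightarrow> cl set" where
  "cl_alg n = {u. \<forall>A. A \<notin> blades n \<longrightarrow> u A = 0}"

definition cl_prod_list :: "nat \<Rightarrow> cl list \<Rightarrow> cl" where
  "cl_prod_list n xs = foldr (cl_mult n) xs cl_one"

definition witt_f :: "nat \<Rightarrow> cl" where
  "witt_f k = cl_scale (1/2) (cl_add (cl_scale (-1) (gen (2*k - 1))) (cl_scale \<i> (gen (2*k))))"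

definition witt_fd :: "nat \<Rightarrow> cl" where
  "witt_fd k = cl_scale (1/2) (cl_add (gen (2*k - 1)) (cl_scale \<i> (gen (2*k))))"

definition idemI :: "nat \<Rightarrow> cl" where
  "idemI p = cl_prod_list (4*p) (map (\<lambda>k. cl_mult (4*p) (witt_f k) (witt_fd k)) [1..<2*p+1])"

definition spinor :: "nat \<Rightarrow> cl set" where
  "spinor p = {cl_mult (4*p) a (idemI p) | a. a \<in> cl_alg (4*p)}"

definition spin_basis :: "nat \<Rightarrow> nat set \<Rightarrow> cl" where
  "spin_basis p J = cl_mult (4*p) (cl_prod_list (4*p) (map witt_fd (sorted_list_of_set J))) (idemI p)"

definition spinor_r :: "nat \<Rightarrow> nat \<Rightarrow> cl set" where
  "spinor_r p r = {(\<lambda>A. \<Sum>J\<in>{J. J \<subseteq> {1..2*p} \<and> card J = r}. c J * spin_basis p J A) | c. True}"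

text \<open>Real linear maps on the vectors of R^(4p) inside C_(4p), given on generators.\<close>
definition mapI :: "nat \<Rightarrow> cl" where
  "mapI \<alpha> = (if odd \<alpha> then gen (\<alpha> + 1) else cl_scale (-1) (gen (\<alpha> - 1)))"

definition mapJ :: "nat \<Rightarrow> cl" where
  "mapJ \<alpha> = (if \<alpha> mod 4 = 1 then gen (\<alpha> + 2)
             else if \<alpha> mod 4 = 2 then cl_scale (-1) (gen (\<alpha> + 2))
             else if \<alpha> mod 4 = 3 then cl_scale (-1) (gen (\<alpha> - 2))
             else gen (\<alpha> - 2))"

text \<open>Linear extension of a map given on generators, applied to a vector
  v = sum_beta v_beta e_beta (coefficient of e_beta is v {beta}).\<close>
definition lin_ext :: "nat \<Rightarrow> (nat \<Rightarrow> cl) \<Rightarrow> cl \<Rightarrow> cl" where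
  "lin_ext n M v = (\<lambda>A. \<Sum>\<beta>\<in>{1..n}. v {\<beta>} * M \<beta> A)"

definition mapK :: "nat \<Rightarrow> nat \<Rightarrow> cl" where
  "mapK n \<alpha> = lin_ext n mapI (mapJ \<alpha>)"

text \<open>Partial derivative d/dX_alpha of a C_n-valued function on R^n; the coordinate X_alpha
  is the component at idx alpha (idx a labelling of the coordinates by 1..n).\<close>
definition pder :: "(nat \<Rightarrow> 'n::finite) \<Rightarrow> (real^'n \<Rightarrow> cl) \<Rightarrow> nat \<Rightarrow> real^'n \<Rightarrow> cl" where
  "pder idx G \<alpha> x = (\<lambda>A. frechet_derivative (\<lambda>y. G y A) (at x) (axis (idx \<alpha>) 1))"

definition dirac :: "nat \<Rightarrow> (nat \<Rightarrow> 'n::finite) \<Rightarrow> (nat \<Rightarrow> cl) \<Rightarrow> (real^'n \<Rightarrow> cl) \<Rightarrow> real^'n \<Rightarrow> cl" where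
  "dirac n idx M G x = (\<lambda>C. \<Sum>\<alpha>\<in>{1..n}. cl_mult n (M \<alpha>) (pder idx G \<alpha> x) C)"

definition M_monogenic :: "nat \<Rightarrow> (nat \<Rightarrow> 'n::finite) \<Rightarrow> (nat \<Rightarrow> cl) \<Rightarrow> (real^'n) set \<Rightarrow> (real^'n \<Rightarrow> cl) \<Rightarrow> bool" where
  "M_monogenic n idx M \<Omega> G \<longleftrightarrow> (\<forall>x\<in>\<Omega>. dirac n idx M G x = cl_zero)"

definition q_monogenic :: "nat \<Rightarrow> (nat \<Rightarrow> 'n::finite) \<Rightarrow> (real^'n) set \<Rightarrow> (real^'n \<Rightarrow> cl) \<Rightarrow> bool" where
  "q_monogenic p idx \<Omega> G \<longleftrightarrow> (\<forall>x\<in>\<Omega>. G x \<in> spinor p)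
     \<and> M_monogenic (4*p) idx gen \<Omega> G
     \<and> M_monogenic (4*p) idx mapI \<Omega> G
     \<and> M_monogenic (4*p) idx mapJ \<Omega> G
     \<and> M_monogenic (4*p) idx (mapK (4*p)) \<Omega> G"

end

theory Submission
  imports Defs
begin


definition eps :: "nat \<Rightarrow> nat \<Rightarrow> complex" where "eps a b = (if b \<le> a then -1 else 1)"

lemma sign_part1:
  assumes "finite A" "finite B"
  shows "(-1::complex) ^ card {(a, b). a \<in> A \<and> b \<in> B \<and> b < a} = (\<Prod>a\<in>A. \<Prod>b\<in>B. if b < a then -1 else 1)"
proof -
  have e: "{(a, b). a \<in> A \<and> b \<in> B \<and> b < a} = {q \<in> A \<times> B. snd q < fst q}" by auto
  have f: "finite (A \<times> B)" using assms by simp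
  have "(-1::complex) ^ card {q \<in> A \<times> B. snd q < fst q} = (\<Prod>q\<in>{q \<in> A \<times> B. snd q < fst q}. -1)" by simp
  also have "\<dots> = (\<Prod>q\<in>A \<times> B. if snd q < fst q then -1 else 1)" using f by (rule prod.inter_filter)
  also have "\<dots> = (\<Prod>a\<in>A. \<Prod>b\<in>B. if b < a then -1 else 1)"
    by (simp add: prod.cartesian_product case_prod_beta')
  finally show ?thesis using e by simp
qed

lemma sign_part2:
  assumes "finite A" "finite B"
  shows "(-1::complex) ^ card (A \<inter> B) = (\<Prod>a\<in>A. \<Prod>b\<in>B. if a = b then -1 else 1)"
proof -
  have "(\<Prod>a\<in>A. \<Prod>b\<in>B. if a = b then -1 else (1::complex)) = (\<Prod>a\<in>A. if a \<in> B then -1 else 1)"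
    using assms by (simp add: prod.delta)
  also have "\<dots> = (\<Prod>a\<in>{a\<in>A. a \<in> B}. -1)" by (rule prod.inter_filter[symmetric, OF assms(1)])
  also have "\<dots> = (-1) ^ card (A \<inter> B)" by (simp add: Int_def)
  finally show ?thesis by simp
qed

lemma blade_sign_prod:
  assumes "finite A" "finite B"
  shows "blade_sign A B = (\<Prod>a\<in>A. \<Prod>b\<in>B. eps a b)"
proof -
  have "\<And>a b. eps a b = (if b < a then -1 else 1) * (if a = b then -1 else 1)"
    by (auto simp: eps_def)
  then have "(\<Prod>a\<in>A. \<Prod>b\<in>B. eps a b) = (\<Prod>a\<in>A. \<Prod>b\<in>B. if b < a then -1 else 1) * (\<Prod>a\<in>A. \<Prod>b\<in>B. if a = b then -1 else 1)"
    by (simp add: prod.distrib)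
  then show ?thesis unfolding blade_sign_def using sign_part1[OF assms] sign_part2[OF assms] by simp
qed

lemma prod_sd:
  fixes g :: "nat \<Rightarrow> complex"
  assumes "finite A" "finite B" "\<And>x. g x * g x = 1"
  shows "prod g ((A - B) \<union> (B - A)) = prod g A * prod g B"
proof -
  have a: "prod g A = prod g (A - B) * prod g (A \<inter> B)"
  proof -
    have "A = (A - B) \<union> (A \<inter> B)" by auto
    then have "prod g A = prod g ((A - B) \<union> (A \<inter> B))" by simp
    also have "\<dots> = prod g (A - B) * prod g (A \<inter> B)" using assms by (intro prod.union_disjoint) auto
    finally show ?thesis .
  qed
  have b: "prod g B = prod g (B - A) * prod g (A \<inter> B)"
  proof -
    have "B = (B - A) \<union> (A \<inter> B)" by auto
    then have "prod g B = prod g ((B - A) \<union> (A \<inter> B))" by simp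
    also have "\<dots> = prod g (B - A) * prod g (A \<inter> B)" using assms by (intro prod.union_disjoint) auto
    finally show ?thesis .
  qed
  have c: "prod g ((A - B) \<union> (B - A)) = prod g (A - B) * prod g (B - A)"
    using assms by (intro prod.union_disjoint) auto
  have d: "prod g (A \<inter> B) * prod g (A \<inter> B) = 1"
    using assms by (simp add: prod.distrib[symmetric])
  show ?thesis using a b c d by (metis (no_types, lifting) mult.assoc mult.commute mult.left_neutral)
qed

lemma eps_sq: "eps a b * eps a b = 1" by (simp add: eps_def)

lemma blade_sign_sd_left:
  assumes "finite A" "finite B" "finite D"
  shows "blade_sign ((A - B) \<union> (B - A)) D = blade_sign A D * blade_sign B D"
proof -
  have "blade_sign ((A - B) \<union> (B - A)) D = (\<Prod>x\<in>(A - B) \<union> (B - A). \<Prod>d\<in>D. eps x d)"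
    using assms by (simp add: blade_sign_prod)
  also have "\<dots> = (\<Prod>x\<in>A. \<Prod>d\<in>D. eps x d) * (\<Prod>x\<in>B. \<Prod>d\<in>D. eps x d)"
    using assms by (intro prod_sd) (simp_all add: prod.distrib[symmetric] eps_sq)
  finally show ?thesis using assms by (simp add: blade_sign_prod)
qed

lemma blade_sign_sd_right:
  assumes "finite A" "finite B" "finite D"
  shows "blade_sign A ((B - D) \<union> (D - B)) = blade_sign A B * blade_sign A D"
proof -
  have "blade_sign A ((B - D) \<union> (D - B)) = (\<Prod>a\<in>A. \<Prod>y\<in>(B - D) \<union> (D - B). eps a y)"
    using assms by (simp add: blade_sign_prod)
  also have "\<dots> = (\<Prod>a\<in>A. (\<Prod>y\<in>B. eps a y) * (\<Prod>y\<in>D. eps a y))"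
    using assms by (intro prod.cong refl prod_sd) (simp_all add: eps_sq)
  finally show ?thesis using assms by (simp add: blade_sign_prod prod.distrib)
qed

lemma sum_rot3: "(\<Sum>x\<in>X. \<Sum>y\<in>Y. \<Sum>z\<in>Z. g x y z) = (\<Sum>y\<in>Y. \<Sum>z\<in>Z. \<Sum>x\<in>X. g x y z)"
proof -
  have "(\<Sum>x\<in>X. \<Sum>y\<in>Y. \<Sum>z\<in>Z. g x y z) = (\<Sum>y\<in>Y. \<Sum>x\<in>X. \<Sum>z\<in>Z. g x y z)" by (rule sum.swap)
  also have "\<dots> = (\<Sum>y\<in>Y. \<Sum>z\<in>Z. \<Sum>x\<in>X. g x y z)" by (rule sum.cong[OF refl], rule sum.swap)
  finally show ?thesis .
qed

lemma sum_swap4: "(\<Sum>c\<in>C. \<Sum>d\<in>D. \<Sum>a\<in>A. \<Sum>b\<in>B. f c d a b) = (\<Sum>a\<in>A. \<Sum>b\<in>B. \<Sum>d\<in>D. \<Sum>c\<in>C. f c d a b)"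
proof -
  have "(\<Sum>c\<in>C. \<Sum>d\<in>D. \<Sum>a\<in>A. \<Sum>b\<in>B. f c d a b) = (\<Sum>c\<in>C. \<Sum>a\<in>A. \<Sum>b\<in>B. \<Sum>d\<in>D. f c d a b)"
    by (rule sum.cong[OF refl], rule sum_rot3)
  also have "\<dots> = (\<Sum>a\<in>A. \<Sum>b\<in>B. \<Sum>c\<in>C. \<Sum>d\<in>D. f c d a b)" by (rule sum_rot3)
  also have "\<dots> = (\<Sum>a\<in>A. \<Sum>b\<in>B. \<Sum>d\<in>D. \<Sum>c\<in>C. f c d a b)"
    by (rule sum.cong[OF refl], rule sum.cong[OF refl], rule sum.swap)
  finally show ?thesis .
qed

lemma if_sum_distrib:
  "(if c then k * (\<Sum>a\<in>X. \<Sum>b\<in>Y. if p a b then g a b else 0) * w else (0::complex)) =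
   (\<Sum>a\<in>X. \<Sum>b\<in>Y. if p a b then (if c then k * g a b * w else 0) else 0)"
  by (cases c) (auto simp: sum_distrib_left sum_distrib_right cong: if_cong intro!: sum.cong)

lemma if_sum_distrib2:
  "(if c then k * u * (\<Sum>a\<in>X. \<Sum>b\<in>Y. if p a b then g a b else 0) else (0::complex)) =
   (\<Sum>a\<in>X. \<Sum>b\<in>Y. if p a b then (if c then k * u * g a b else 0) else 0)"
  by (cases c) (auto simp: sum_distrib_left sum_distrib_right cong: if_cong intro!: sum.cong)

lemma finite_blades[simp]: "finite (blades n)" by (simp add: blades_def)
lemma blades_finite_mem: "A \<in> blades n \<Longrightarrow> finite A"
  by (auto simp: blades_def intro: finite_subset)
lemma sd_blades: "A \<in> blades n \<Longrightarrow> B \<in> blades n \<Longrightarrow> (A - B) \<union> (B - A) \<in> blades n"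
  by (auto simp: blades_def)

lemma cocycle:
  assumes "finite A" "finite B" "finite D"
  shows "blade_sign A B * blade_sign ((A - B) \<union> (B - A)) D = blade_sign B D * blade_sign A ((B - D) \<union> (D - B))"
  using assms by (simp add: blade_sign_sd_left blade_sign_sd_right)

lemma sd_assoc: "((A - B) \<union> (B - A) - D) \<union> (D - ((A - B) \<union> (B - A))) = (A - ((B - D) \<union> (D - B))) \<union> (((B - D) \<union> (D - B)) - A)"
  by auto

lemma cl_mult_assoc: "cl_mult n (cl_mult n u v) w = cl_mult n u (cl_mult n v w)"
proof (rule ext)
  fix E
  let ?P = "blades n"
  let ?sd = "\<lambda>A B. (A - B) \<union> (B - A)"
  have L: "cl_mult n (cl_mult n u v) w E = (\<Sum>A\<in>?P. \<Sum>B\<in>?P. \<Sum>D\<in>?P.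
      if ?sd (?sd A B) D = E then blade_sign (?sd A B) D * (blade_sign A B * u A * v B) * w D else 0)"
  proof -
    have "cl_mult n (cl_mult n u v) w E = (\<Sum>C\<in>?P. \<Sum>D\<in>?P. \<Sum>A\<in>?P. \<Sum>B\<in>?P.
       if ?sd A B = C then (if ?sd C D = E then blade_sign C D * (blade_sign A B * u A * v B) * w D else 0) else 0)"
      unfolding cl_mult_def by (simp only: if_sum_distrib)
    also have "\<dots> = (\<Sum>A\<in>?P. \<Sum>B\<in>?P. \<Sum>D\<in>?P. \<Sum>C\<in>?P.
       if ?sd A B = C then (if ?sd C D = E then blade_sign C D * (blade_sign A B * u A * v B) * w D else 0) else 0)"
      by (rule sum_swap4)
    also have "\<dots> = (\<Sum>A\<in>?P. \<Sum>B\<in>?P. \<Sum>D\<in>?P.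
      if ?sd (?sd A B) D = E then blade_sign (?sd A B) D * (blade_sign A B * u A * v B) * w D else 0)"
      by (intro sum.cong refl) (simp add: sum.delta' sd_blades)
    finally show ?thesis .
  qed
  have R: "cl_mult n u (cl_mult n v w) E = (\<Sum>A\<in>?P. \<Sum>B\<in>?P. \<Sum>D\<in>?P.
      if ?sd A (?sd B D) = E then blade_sign A (?sd B D) * u A * (blade_sign B D * v B * w D) else 0)"
  proof -
    have "cl_mult n u (cl_mult n v w) E = (\<Sum>A\<in>?P. \<Sum>X\<in>?P. \<Sum>B\<in>?P. \<Sum>D\<in>?P.
       if ?sd B D = X then (if ?sd A X = E then blade_sign A X * u A * (blade_sign B D * v B * w D) else 0) else 0)"
      unfolding cl_mult_def by (simp only: if_sum_distrib2)
    also have "\<dots> = (\<Sum>A\<in>?P. \<Sum>B\<in>?P. \<Sum>D\<in>?P. \<Sum>X\<in>?P.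
       if ?sd B D = X then (if ?sd A X = E then blade_sign A X * u A * (blade_sign B D * v B * w D) else 0) else 0)"
      by (rule sum.cong[OF refl], rule sum_rot3)
    also have "\<dots> = (\<Sum>A\<in>?P. \<Sum>B\<in>?P. \<Sum>D\<in>?P.
      if ?sd A (?sd B D) = E then blade_sign A (?sd B D) * u A * (blade_sign B D * v B * w D) else 0)"
      by (intro sum.cong refl) (simp add: sum.delta' sd_blades)
    finally show ?thesis .
  qed
  have T: "\<And>A B D. A \<in> ?P \<Longrightarrow> B \<in> ?P \<Longrightarrow> D \<in> ?P \<Longrightarrow>
     (if ?sd (?sd A B) D = E then blade_sign (?sd A B) D * (blade_sign A B * u A * v B) * w D else 0)
   = (if ?sd A (?sd B D) = E then blade_sign A (?sd B D) * u A * (blade_sign B D * v B * w D) else 0)"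
  proof -
    fix A B D assume "A \<in> ?P" "B \<in> ?P" "D \<in> ?P"
    then have f: "finite A" "finite B" "finite D" by (auto intro: blades_finite_mem)
    have c: "blade_sign A B * blade_sign (?sd A B) D = blade_sign B D * blade_sign A (?sd B D)"
      using cocycle[OF f] .
    show "?thesis A B D" unfolding sd_assoc
      using c by (simp add: algebra_simps)
  qed
  show "cl_mult n (cl_mult n u v) w E = cl_mult n u (cl_mult n v w) E"
    unfolding L R by (intro sum.cong refl T)
qed



lemma cl_mult_in_alg: "cl_mult n u v \<in> cl_alg n"
  unfolding cl_alg_def mem_Collect_eq
proof (intro allI impI)
  fix C assume C: "C \<notin> blades n"
  show "cl_mult n u v C = 0" unfolding cl_mult_def
    by (rule sum.neutral, rule ballI, rule sum.neutral) (use C sd_blades in auto)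
qed

lemma cl_one_alg: "cl_one \<in> cl_alg n"
  by (auto simp: cl_alg_def cl_one_def blades_def)

lemma blade_sign_empty[simp]: "blade_sign {} B = 1" "blade_sign A {} = 1"
  by (simp_all add: blade_sign_def)

lemma mul_one_left: "u \<in> cl_alg n \<Longrightarrow> cl_mult n cl_one u = u"
proof (rule ext)
  fix C assume u: "u \<in> cl_alg n"
  have e: "{} \<in> blades n" by (simp add: blades_def)
  have "cl_mult n cl_one u C = (\<Sum>A\<in>blades n. if A = {} then (\<Sum>B\<in>blades n. if (A - B) \<union> (B - A) = C then blade_sign A B * u B else 0) else 0)"
    unfolding cl_mult_def cl_one_def by (intro sum.cong refl) (auto intro!: sum.cong cong: if_cong)
  also have "\<dots> = (\<Sum>B\<in>blades n. if B = C then u B else 0)"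
    using e by (simp add: sum.delta)
  also have "\<dots> = u C" using u by (auto simp: sum.delta cl_alg_def)
  finally show "cl_mult n cl_one u C = u C" .
qed

lemma mul_one_right: "u \<in> cl_alg n \<Longrightarrow> cl_mult n u cl_one = u"
proof (rule ext)
  fix C assume u: "u \<in> cl_alg n"
  have e: "{} \<in> blades n" by (simp add: blades_def)
  have "cl_mult n u cl_one C = (\<Sum>A\<in>blades n. \<Sum>B\<in>blades n. if B = {} then (if (A - B) \<union> (B - A) = C then blade_sign A B * u A else 0) else 0)"
    unfolding cl_mult_def cl_one_def by (intro sum.cong refl) (auto intro!: sum.cong cong: if_cong)
  also have "\<dots> = (\<Sum>A\<in>blades n. if A = C then u A else 0)"
    using e by (simp add: sum.delta)
  also have "\<dots> = u C" using u by (auto simp: sum.delta cl_alg_def)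
  finally show "cl_mult n u cl_one C = u C" .
qed

lemma mul_lin_left:
  assumes "finite I"
  shows "cl_mult n (\<lambda>A. \<Sum>i\<in>I. c i * u i A) w = (\<lambda>C. \<Sum>i\<in>I. c i * cl_mult n (u i) w C)"
proof (rule ext)
  fix C
  let ?P = "blades n"
  have "cl_mult n (\<lambda>A. \<Sum>i\<in>I. c i * u i A) w C =
     (\<Sum>A\<in>?P. \<Sum>B\<in>?P. \<Sum>i\<in>I. c i * (if (A - B) \<union> (B - A) = C then blade_sign A B * u i A * w B else 0))"
    unfolding cl_mult_def
    by (intro sum.cong refl) (simp add: sum_distrib_left sum_distrib_right algebra_simps)
  also have "\<dots> = (\<Sum>i\<in>I. \<Sum>A\<in>?P. \<Sum>B\<in>?P. c i * (if (A - B) \<union> (B - A) = C then blade_sign A B * u i A * w B else 0))"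
    by (simp add: sum_rot3[where X="?P"] sum_rot3[where X="?P" and Y = "?P"])
  also have "\<dots> = (\<Sum>i\<in>I. c i * cl_mult n (u i) w C)"
    unfolding cl_mult_def by (simp add: sum_distrib_left)
  finally show "cl_mult n (\<lambda>A. \<Sum>i\<in>I. c i * u i A) w C = (\<Sum>i\<in>I. c i * cl_mult n (u i) w C)" .
qed

lemma mul_lin_right:
  assumes "finite I"
  shows "cl_mult n w (\<lambda>A. \<Sum>i\<in>I. c i * u i A) = (\<lambda>C. \<Sum>i\<in>I. c i * cl_mult n w (u i) C)"
proof (rule ext)
  fix C
  let ?P = "blades n"
  have "cl_mult n w (\<lambda>A. \<Sum>i\<in>I. c i * u i A) C =
     (\<Sum>A\<in>?P. \<Sum>B\<in>?P. \<Sum>i\<in>I. c i * (if (A - B) \<union> (B - A) = C then blade_sign A B * w A * u i B else 0))"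
    unfolding cl_mult_def
    by (intro sum.cong refl) (simp add: sum_distrib_left sum_distrib_right algebra_simps)
  also have "\<dots> = (\<Sum>i\<in>I. \<Sum>A\<in>?P. \<Sum>B\<in>?P. c i * (if (A - B) \<union> (B - A) = C then blade_sign A B * w A * u i B else 0))"
    by (simp add: sum_rot3[where X="?P"] sum_rot3[where X="?P" and Y = "?P"])
  also have "\<dots> = (\<Sum>i\<in>I. c i * cl_mult n w (u i) C)"
    unfolding cl_mult_def by (simp add: sum_distrib_left)
  finally show "cl_mult n w (\<lambda>A. \<Sum>i\<in>I. c i * u i A) C = (\<Sum>i\<in>I. c i * cl_mult n w (u i) C)" .
qed

lemma mul_add_left: "cl_mult n (\<lambda>A. u A + v A) w = (\<lambda>C. cl_mult n u w C + cl_mult n v w C)"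
  unfolding cl_mult_def by (auto simp: sum.distrib[symmetric] algebra_simps intro!: sum.cong)
lemma mul_add_right: "cl_mult n w (\<lambda>A. u A + v A) = (\<lambda>C. cl_mult n w u C + cl_mult n w v C)"
  unfolding cl_mult_def by (auto simp: sum.distrib[symmetric] algebra_simps intro!: sum.cong)
lemma mul_diff_left: "cl_mult n (\<lambda>A. u A - v A) w = (\<lambda>C. cl_mult n u w C - cl_mult n v w C)"
  unfolding cl_mult_def by (auto simp: sum_subtractf[symmetric] algebra_simps intro!: sum.cong)
lemma mul_diff_right: "cl_mult n w (\<lambda>A. u A - v A) = (\<lambda>C. cl_mult n w u C - cl_mult n w v C)"
  unfolding cl_mult_def by (auto simp: sum_subtractf[symmetric] algebra_simps intro!: sum.cong)
lemma mul_scale_left: "cl_mult n (\<lambda>A. c * u A) w = (\<lambda>C. c * cl_mult n u w C)"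
  unfolding cl_mult_def by (auto simp: sum_distrib_left algebra_simps intro!: sum.cong)
lemma mul_scale_right: "cl_mult n w (\<lambda>A. c * u A) = (\<lambda>C. c * cl_mult n w u C)"
  unfolding cl_mult_def by (auto simp: sum_distrib_left algebra_simps intro!: sum.cong)
lemma mul_zero_left: "cl_mult n (\<lambda>A. 0) w = (\<lambda>C. 0)"
  unfolding cl_mult_def by (auto cong: if_cong)
lemma mul_zero_right: "cl_mult n w (\<lambda>A. 0) = (\<lambda>C. 0)"
  unfolding cl_mult_def by (auto cong: if_cong)

definition vecc :: "nat \<Rightarrow> (nat \<Rightarrow> complex) \<Rightarrow> cl" where
  "vecc n c = (\<lambda>A. \<Sum>a\<in>{1..n}. c a * gen a A)"

lemma sing_blades: "a \<in> {1..n} \<Longrightarrow> {a} \<in> blades n" by (simp add: blades_def)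

lemma gen_prod:
  assumes "a \<in> {1..n}" "b \<in> {1..n}"
  shows "cl_mult n (gen a) (gen b) = (\<lambda>C. if ({a} - {b}) \<union> ({b} - {a}) = C then blade_sign {a} {b} else 0)"
proof (rule ext)
  fix C
  have "cl_mult n (gen a) (gen b) C = (\<Sum>A\<in>blades n. \<Sum>B\<in>blades n. if B = {b} then (if A = {a} then
      (if ({a} - {b}) \<union> ({b} - {a}) = C then blade_sign {a} {b} else 0) else 0) else 0)"
  proof -
    have h: "\<And>A B. (if (A - B) \<union> (B - A) = C then blade_sign A B * gen a A * gen b B else 0) = (if B = {b} then (if A = {a} then
      (if ({a} - {b}) \<union> ({b} - {a}) = C then blade_sign {a} {b} else 0) else 0) else 0)"
      by (simp add: gen_def)
    show ?thesis unfolding cl_mult_def by (rule sum.cong[OF refl], rule sum.cong[OF refl], rule h)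
  qed
  also have "\<dots> = (if ({a} - {b}) \<union> ({b} - {a}) = C then blade_sign {a} {b} else 0)"
    using sing_blades[OF assms(1)] sing_blades[OF assms(2)] by (simp add: sum.delta)
  finally show "cl_mult n (gen a) (gen b) C = (if ({a} - {b}) \<union> ({b} - {a}) = C then blade_sign {a} {b} else 0)" .
qed

lemma blade_sign_sing: "blade_sign {a} {b} = (if b < a then -1 else 1) * (if a = b then -1 else 1)"
proof -
  have "{(x, y). x \<in> {a} \<and> y \<in> {b} \<and> y < x} = (if b < a then {(a, b)} else {})" by auto
  then show ?thesis unfolding blade_sign_def by auto
qed

lemma gen_anticomm:
  assumes "a \<in> {1..n}" "b \<in> {1..n}"
  shows "(\<lambda>C. cl_mult n (gen a) (gen b) C + cl_mult n (gen b) (gen a) C) = (\<lambda>C. (if a = b then -2 else 0) * cl_one C)"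
proof (rule ext)
  fix C
  show "cl_mult n (gen a) (gen b) C + cl_mult n (gen b) (gen a) C = (if a = b then -2 else 0) * cl_one C"
  proof (cases "a = b")
    case True then show ?thesis using assms by (simp add: gen_prod blade_sign_sing cl_one_def)
  next
    case False
    have e: "({b} - {a}) \<union> ({a} - {b}) = ({a} - {b}) \<union> ({b} - {a})" by auto
    have "blade_sign {a} {b} + blade_sign {b} {a} = 0" using False by (auto simp: blade_sign_sing)
    then show ?thesis using assms False by (simp add: gen_prod e cl_one_def insert_commute)
  qed
qed

lemma vec_anticomm:
  "(\<lambda>C. cl_mult n (vecc n c) (vecc n d) C + cl_mult n (vecc n d) (vecc n c) C)
   = (\<lambda>C. (-2 * (\<Sum>a\<in>{1..n}. c a * d a)) * cl_one C)"
proof (rule ext)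
  fix C
  let ?m = "\<lambda>a b. cl_mult n (gen a) (gen b) C"
  have m1: "\<And>c d. cl_mult n (vecc n c) (vecc n d) C = (\<Sum>a\<in>{1..n}. c a * (\<Sum>b\<in>{1..n}. d b * ?m a b))"
    unfolding vecc_def by (simp add: mul_lin_left mul_lin_right)
  have "cl_mult n (vecc n c) (vecc n d) C + cl_mult n (vecc n d) (vecc n c) C
     = (\<Sum>a\<in>{1..n}. \<Sum>b\<in>{1..n}. c a * d b * ?m a b) + (\<Sum>a\<in>{1..n}. \<Sum>b\<in>{1..n}. d a * c b * ?m a b)"
    unfolding m1 by (simp add: sum_distrib_left algebra_simps)
  also have "(\<Sum>a\<in>{1..n}. \<Sum>b\<in>{1..n}. d a * c b * ?m a b) = (\<Sum>a\<in>{1..n}. \<Sum>b\<in>{1..n}. c a * d b * ?m b a)"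
    by (subst sum.swap) (simp add: algebra_simps)
  also have "(\<Sum>a\<in>{1..n}. \<Sum>b\<in>{1..n}. c a * d b * ?m a b) + (\<Sum>a\<in>{1..n}. \<Sum>b\<in>{1..n}. c a * d b * ?m b a)
     = (\<Sum>a\<in>{1..n}. \<Sum>b\<in>{1..n}. c a * d b * (?m a b + ?m b a))"
    by (simp add: sum.distrib[symmetric] algebra_simps)
  also have "\<dots> = (\<Sum>a\<in>{1..n}. \<Sum>b\<in>{1..n}. if a = b then c a * d b * (-2 * cl_one C) else 0)"
  proof (intro sum.cong refl)
    fix a b assume "a \<in> {1..n}" "b \<in> {1..n}"
    from fun_cong[OF gen_anticomm[OF this], of C]
    show "c a * d b * (?m a b + ?m b a) = (if a = b then c a * d b * (-2 * cl_one C) else 0)" by auto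
  qed
  also have "\<dots> = (\<Sum>a\<in>{1..n}. c a * d a * (-2 * cl_one C))"
    by (simp add: sum.delta)
  also have "\<dots> = (-2 * (\<Sum>a\<in>{1..n}. c a * d a)) * cl_one C"
    by (simp only: sum_distrib_right[symmetric]) (simp add: algebra_simps)
  finally show "cl_mult n (vecc n c) (vecc n d) C + cl_mult n (vecc n d) (vecc n c) C = (-2 * (\<Sum>a\<in>{1..n}. c a * d a)) * cl_one C" .
qed

lemma vec_anticomm_act:
  assumes w: "w \<in> cl_alg n"
  shows "cl_mult n (vecc n c) (cl_mult n (vecc n d) w) =
     (\<lambda>C. (-2 * (\<Sum>a\<in>{1..n}. c a * d a)) * w C - cl_mult n (vecc n d) (cl_mult n (vecc n c) w) C)"
proof -
  let ?k = "-2 * (\<Sum>a\<in>{1..n}. c a * d a)"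
  have h0: "cl_mult n (\<lambda>C. cl_mult n (vecc n c) (vecc n d) C + cl_mult n (vecc n d) (vecc n c) C) w
     = cl_mult n (\<lambda>C. ?k * cl_one C) w" by (simp only: vec_anticomm)
  have h1: "cl_mult n (\<lambda>C. cl_mult n (vecc n c) (vecc n d) C + cl_mult n (vecc n d) (vecc n c) C) w
     = (\<lambda>C. cl_mult n (vecc n c) (cl_mult n (vecc n d) w) C + cl_mult n (vecc n d) (cl_mult n (vecc n c) w) C)"
    by (simp only: mul_add_left cl_mult_assoc)
  have h2: "cl_mult n (\<lambda>C. ?k * cl_one C) w = (\<lambda>C. ?k * w C)"
    by (simp only: mul_scale_left mul_one_left[OF w])
  have "(\<lambda>C. cl_mult n (vecc n c) (cl_mult n (vecc n d) w) C + cl_mult n (vecc n d) (cl_mult n (vecc n c) w) C)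
     = (\<lambda>C. ?k * w C)" using h0 h1 h2 by simp
  then show ?thesis by (auto simp: fun_eq_iff algebra_simps dest: fun_cong)
qed

lemma mul_sum_left: "finite I \<Longrightarrow> cl_mult n (\<lambda>A. \<Sum>i\<in>I. u i A) w = (\<lambda>C. \<Sum>i\<in>I. cl_mult n (u i) w C)"
  using mul_lin_left[of I n "\<lambda>i. 1" u w] by simp
lemma mul_sum_right: "finite I \<Longrightarrow> cl_mult n w (\<lambda>A. \<Sum>i\<in>I. u i A) = (\<lambda>C. \<Sum>i\<in>I. cl_mult n w (u i) C)"
  using mul_lin_right[of I n w "\<lambda>i. 1" u] by simp

definition cF :: "nat \<Rightarrow> nat \<Rightarrow> complex" where
  "cF k a = (if a = 2*k-1 then -1/2 else 0) + (if a = 2*k then \<i>/2 else 0)"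
definition cFd :: "nat \<Rightarrow> nat \<Rightarrow> complex" where
  "cFd k a = (if a = 2*k-1 then 1/2 else 0) + (if a = 2*k then \<i>/2 else 0)"

lemma two_pt_sum:
  fixes g :: "nat \<Rightarrow> complex"
  assumes "finite S" "x1 \<in> S" "x2 \<in> S" "x1 \<noteq> x2"
  shows "(\<Sum>a\<in>S. ((if a = x1 then \<alpha> else 0) + (if a = x2 then \<beta> else 0)) * g a) = \<alpha> * g x1 + \<beta> * g x2"
proof -
  have "(\<Sum>a\<in>S. ((if a = x1 then \<alpha> else 0) + (if a = x2 then \<beta> else 0)) * g a)
     = (\<Sum>a\<in>S. (if a = x1 then \<alpha> * g a else 0)) + (\<Sum>a\<in>S. (if a = x2 then \<beta> * g a else 0))"
    by (simp add: sum.distrib[symmetric], intro sum.cong) (auto simp: distrib_right)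
  also have "\<dots> = \<alpha> * g x1 + \<beta> * g x2" using assms by (simp add: sum.delta)
  finally show ?thesis .
qed

lemma idx_facts:
  assumes "1 \<le> (j::nat)" "1 \<le> k"
  shows "(2*k-1 = 2*j-1) = (k = j)" "(2*k = 2*j) = (k = j)" "2*k-1 \<noteq> 2*j" "2*k \<noteq> 2*j-1"
  using assms by arith+

lemma witt_f_vec:
  assumes "1 \<le> k" "2*k \<le> n"
  shows "witt_f k = vecc n (cF k)"
proof (rule ext)
  fix A
  have "vecc n (cF k) A = (-1/2) * gen (2*k-1) A + (\<i>/2) * gen (2*k) A"
    unfolding vecc_def cF_def using assms by (subst two_pt_sum) auto
  then show "witt_f k A = vecc n (cF k) A"
    by (simp add: witt_f_def cl_scale_def cl_add_def algebra_simps)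
qed

lemma witt_fd_vec:
  assumes "1 \<le> k" "2*k \<le> n"
  shows "witt_fd k = vecc n (cFd k)"
proof (rule ext)
  fix A
  have "vecc n (cFd k) A = (1/2) * gen (2*k-1) A + (\<i>/2) * gen (2*k) A"
    unfolding vecc_def cFd_def using assms by (subst two_pt_sum) auto
  then show "witt_fd k A = vecc n (cFd k) A"
    by (simp add: witt_fd_def cl_scale_def cl_add_def algebra_simps)
qed

lemma ip_eval:
  assumes "1 \<le> k" "2*k \<le> n"
  shows "(\<Sum>a\<in>{1..n}. g a * cF k a) = (-1/2) * g (2*k-1) + (\<i>/2) * g (2*k)"
    "(\<Sum>a\<in>{1..n}. g a * cFd k a) = (1/2) * g (2*k-1) + (\<i>/2) * g (2*k)"
proof -
  have "(\<Sum>a\<in>{1..n}. g a * cF k a) = (\<Sum>a\<in>{1..n}. ((if a = 2*k-1 then -1/2 else 0) + (if a = 2*k then \<i>/2 else 0)) * g a)"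
    by (simp add: cF_def mult.commute)
  also have "\<dots> = (-1/2) * g (2*k-1) + (\<i>/2) * g (2*k)" using assms by (subst two_pt_sum) auto
  finally show "(\<Sum>a\<in>{1..n}. g a * cF k a) = (-1/2) * g (2*k-1) + (\<i>/2) * g (2*k)" .
  have "(\<Sum>a\<in>{1..n}. g a * cFd k a) = (\<Sum>a\<in>{1..n}. ((if a = 2*k-1 then 1/2 else 0) + (if a = 2*k then \<i>/2 else 0)) * g a)"
    by (simp add: cFd_def mult.commute)
  also have "\<dots> = (1/2) * g (2*k-1) + (\<i>/2) * g (2*k)" using assms by (subst two_pt_sum) auto
  finally show "(\<Sum>a\<in>{1..n}. g a * cFd k a) = (1/2) * g (2*k-1) + (\<i>/2) * g (2*k)" .
qed



lemma cF_vals: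
  assumes "1 \<le> j" "1 \<le> k"
  shows "cF j (2*k-1) = (if j = k then -1/2 else 0)" "cF j (2*k) = (if j = k then \<i>/2 else 0)"
    "cFd j (2*k-1) = (if j = k then 1/2 else 0)" "cFd j (2*k) = (if j = k then \<i>/2 else 0)"
proof -
  have a: "(2*k-1 = 2*j-1) = (j = k)" "(2*k = 2*j) = (j = k)" "(2*k-1 = 2*j) = False" "(2*k = 2*j-1) = False"
    using assms by arith+
  show "cF j (2*k-1) = (if j = k then -1/2 else 0)" unfolding cF_def a by simp
  show "cF j (2*k) = (if j = k then \<i>/2 else 0)" unfolding cF_def a by simp
  show "cFd j (2*k-1) = (if j = k then 1/2 else 0)" unfolding cFd_def a by simp
  show "cFd j (2*k) = (if j = k then \<i>/2 else 0)" unfolding cFd_def a by simp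
qed

lemma ip_vals:
  assumes "1 \<le> j" "1 \<le> k" "2*k \<le> n"
  shows "(\<Sum>a\<in>{1..n}. cF j a * cF k a) = 0"
    "(\<Sum>a\<in>{1..n}. cFd j a * cFd k a) = 0"
    "(\<Sum>a\<in>{1..n}. cF j a * cFd k a) = (if j = k then -1/2 else 0)"
    "(\<Sum>a\<in>{1..n}. cFd j a * cF k a) = (if j = k then -1/2 else 0)"
  unfolding ip_eval[OF assms(2,3)] cF_vals[OF assms(1,2)]
  by (simp_all add: algebra_simps)

lemma if10_mult: "(if P then 1 else 0) * (x::complex) = (if P then x else 0)" by simp
lemma if10_mult': "- (if P then 1 else 0) * (x::complex) = (if P then -x else 0)" by simp

locale wsetup =
  fixes n m :: nat
  assumes nm: "2*m \<le> n"
begin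

lemma wf_vec: "k \<in> {1..m} \<Longrightarrow> witt_f k = vecc n (cF k)"
  using nm by (intro witt_f_vec) auto
lemma wfd_vec: "k \<in> {1..m} \<Longrightarrow> witt_fd k = vecc n (cFd k)"
  using nm by (intro witt_fd_vec) auto

lemma AF:
  assumes "j \<in> {1..m}" "k \<in> {1..m}" "w \<in> cl_alg n"
  shows "cl_mult n (witt_f j) (cl_mult n (witt_f k) w) = (\<lambda>C. - cl_mult n (witt_f k) (cl_mult n (witt_f j) w) C)"
  using vec_anticomm_act[OF assms(3), of "cF j" "cF k"] ip_vals(1)[of j k n] assms nm
  by (simp add: wf_vec)

lemma AFd:
  assumes "j \<in> {1..m}" "k \<in> {1..m}" "w \<in> cl_alg n"
  shows "cl_mult n (witt_fd j) (cl_mult n (witt_fd k) w) = (\<lambda>C. - cl_mult n (witt_fd k) (cl_mult n (witt_fd j) w) C)"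
  using vec_anticomm_act[OF assms(3), of "cFd j" "cFd k"] ip_vals(2)[of j k n] assms nm
  by (simp add: wfd_vec)

lemma AX:
  assumes "j \<in> {1..m}" "k \<in> {1..m}" "w \<in> cl_alg n"
  shows "cl_mult n (witt_f j) (cl_mult n (witt_fd k) w) = (\<lambda>C. (if j = k then 1 else 0) * w C - cl_mult n (witt_fd k) (cl_mult n (witt_f j) w) C)"
  using vec_anticomm_act[OF assms(3), of "cF j" "cFd k"] ip_vals(3)[of j k n] assms nm
  by (simp add: wf_vec wfd_vec)

lemma AXd:
  assumes "j \<in> {1..m}" "k \<in> {1..m}" "w \<in> cl_alg n"
  shows "cl_mult n (witt_fd j) (cl_mult n (witt_f k) w) = (\<lambda>C. (if j = k then 1 else 0) * w C - cl_mult n (witt_f k) (cl_mult n (witt_fd j) w) C)"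
  using vec_anticomm_act[OF assms(3), of "cFd j" "cF k"] ip_vals(4)[of j k n] assms nm
  by (simp add: wf_vec wfd_vec)

lemma F_sq:
  assumes "k \<in> {1..m}" "w \<in> cl_alg n"
  shows "cl_mult n (witt_f k) (cl_mult n (witt_f k) w) = (\<lambda>C. 0)"
  using AF[OF assms(1) assms(1) assms(2)] by (auto simp: fun_eq_iff dest: fun_cong)


definition Nel :: cl where "Nel = (\<lambda>A. \<Sum>k\<in>{1..m}. cl_mult n (witt_fd k) (witt_f k) A)"
definition eig :: "complex \<Rightarrow> cl \<Rightarrow> bool" where
  "eig r w \<longleftrightarrow> w \<in> cl_alg n \<and> cl_mult n Nel w = (\<lambda>C. r * w C)"

lemma mul_N: "cl_mult n Nel w = (\<lambda>C. \<Sum>k\<in>{1..m}. cl_mult n (witt_fd k) (cl_mult n (witt_f k) w) C)"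
  unfolding Nel_def by (simp add: mul_sum_left cl_mult_assoc)

lemma raise:
  assumes k: "k \<in> {1..m}" and e: "eig r w"
  shows "eig (r + 1) (cl_mult n (witt_fd k) w)"
  unfolding eig_def
proof (intro conjI cl_mult_in_alg ext)
  fix C
  have w: "w \<in> cl_alg n" and N: "cl_mult n Nel w = (\<lambda>C. r * w C)" using e by (auto simp: eig_def)
  have t: "cl_mult n (witt_fd j) (cl_mult n (witt_f j) (cl_mult n (witt_fd k) w)) C
     = (if j = k then 1 else 0) * cl_mult n (witt_fd j) w C + cl_mult n (witt_fd k) (cl_mult n (witt_fd j) (cl_mult n (witt_f j) w)) C"
    if j: "j \<in> {1..m}" for j
  proof -
    have "cl_mult n (witt_fd j) (cl_mult n (witt_f j) (cl_mult n (witt_fd k) w)) C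
       = cl_mult n (witt_fd j) (\<lambda>C. (if j = k then 1 else 0) * w C - cl_mult n (witt_fd k) (cl_mult n (witt_f j) w) C) C"
      by (simp only: AX[OF j k w])
    also have "\<dots> = (if j = k then 1 else 0) * cl_mult n (witt_fd j) w C - cl_mult n (witt_fd j) (cl_mult n (witt_fd k) (cl_mult n (witt_f j) w)) C"
      by (simp only: mul_diff_right mul_scale_right)
    also have "\<dots> = (if j = k then 1 else 0) * cl_mult n (witt_fd j) w C + cl_mult n (witt_fd k) (cl_mult n (witt_fd j) (cl_mult n (witt_f j) w)) C"
      by (simp add: AFd[OF j k cl_mult_in_alg])
    finally show ?thesis .
  qed
  have "cl_mult n Nel (cl_mult n (witt_fd k) w) C
      = (\<Sum>j\<in>{1..m}. (if j = k then 1 else 0) * cl_mult n (witt_fd j) w C + cl_mult n (witt_fd k) (cl_mult n (witt_fd j) (cl_mult n (witt_f j) w)) C)"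
    unfolding mul_N by (rule sum.cong[OF refl]) (rule t)
  also have "\<dots> = cl_mult n (witt_fd k) w C + (\<Sum>j\<in>{1..m}. cl_mult n (witt_fd k) (cl_mult n (witt_fd j) (cl_mult n (witt_f j) w)) C)"
    using k by (simp add: sum.distrib if10_mult sum.delta)
  also have "(\<Sum>j\<in>{1..m}. cl_mult n (witt_fd k) (cl_mult n (witt_fd j) (cl_mult n (witt_f j) w)) C)
      = cl_mult n (witt_fd k) (cl_mult n Nel w) C"
    unfolding mul_N by (simp add: mul_sum_right)
  also have "\<dots> = r * cl_mult n (witt_fd k) w C" by (simp add: N mul_scale_right)
  finally show "cl_mult n Nel (cl_mult n (witt_fd k) w) C = (r + 1) * cl_mult n (witt_fd k) w C"
    by (simp add: algebra_simps)
qed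

lemma lower:
  assumes k: "k \<in> {1..m}" and e: "eig r w"
  shows "eig (r - 1) (cl_mult n (witt_f k) w)"
  unfolding eig_def
proof (intro conjI cl_mult_in_alg ext)
  fix C
  have w: "w \<in> cl_alg n" and N: "cl_mult n Nel w = (\<lambda>C. r * w C)" using e by (auto simp: eig_def)
  have t: "cl_mult n (witt_fd j) (cl_mult n (witt_f j) (cl_mult n (witt_f k) w)) C
     = - (if j = k then 1 else 0) * cl_mult n (witt_f j) w C + cl_mult n (witt_f k) (cl_mult n (witt_fd j) (cl_mult n (witt_f j) w)) C"
    if j: "j \<in> {1..m}" for j
  proof -
    have "cl_mult n (witt_fd j) (cl_mult n (witt_f j) (cl_mult n (witt_f k) w)) C
       = cl_mult n (witt_fd j) (\<lambda>C. - cl_mult n (witt_f k) (cl_mult n (witt_f j) w) C) C"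
      by (simp only: AF[OF j k w])
    also have "\<dots> = - cl_mult n (witt_fd j) (cl_mult n (witt_f k) (cl_mult n (witt_f j) w)) C"
      using mul_scale_right[of n "witt_fd j" "-1" "cl_mult n (witt_f k) (cl_mult n (witt_f j) w)"] by simp
    also have "\<dots> = - ((if j = k then 1 else 0) * cl_mult n (witt_f j) w C - cl_mult n (witt_f k) (cl_mult n (witt_fd j) (cl_mult n (witt_f j) w)) C)"
      by (simp only: AXd[OF j k cl_mult_in_alg])
    finally show ?thesis by (simp add: algebra_simps)
  qed
  have "cl_mult n Nel (cl_mult n (witt_f k) w) C
      = (\<Sum>j\<in>{1..m}. - (if j = k then 1 else 0) * cl_mult n (witt_f j) w C + cl_mult n (witt_f k) (cl_mult n (witt_fd j) (cl_mult n (witt_f j) w)) C)"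
    unfolding mul_N by (rule sum.cong[OF refl]) (rule t)
  also have "\<dots> = - cl_mult n (witt_f k) w C + (\<Sum>j\<in>{1..m}. cl_mult n (witt_f k) (cl_mult n (witt_fd j) (cl_mult n (witt_f j) w)) C)"
    using k by (simp only: sum.distrib if10_mult') (simp add: sum.delta)
  also have "(\<Sum>j\<in>{1..m}. cl_mult n (witt_f k) (cl_mult n (witt_fd j) (cl_mult n (witt_f j) w)) C)
      = cl_mult n (witt_f k) (cl_mult n Nel w) C"
    unfolding mul_N by (simp add: mul_sum_right)
  also have "\<dots> = r * cl_mult n (witt_f k) w C" by (simp add: N mul_scale_right)
  finally show "cl_mult n Nel (cl_mult n (witt_f k) w) C = (r - 1) * cl_mult n (witt_f k) w C"
    by (simp add: algebra_simps)
qed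


lemma foldr_alg: "foldr (cl_mult n) xs cl_one \<in> cl_alg n"
  by (cases xs) (simp_all add: cl_one_alg cl_mult_in_alg)

lemma annih:
  assumes "k \<in> {1..m}" "set js \<subseteq> {1..m}" "k \<in> set js"
  shows "cl_mult n (witt_f k) (foldr (cl_mult n) (map (\<lambda>j. cl_mult n (witt_f j) (witt_fd j)) js) cl_one) = (\<lambda>C. 0)"
  using assms(2,3)
proof (induction js)
  case Nil then show ?case by simp
next
  case (Cons j js)
  let ?X = "foldr (cl_mult n) (map (\<lambda>j. cl_mult n (witt_f j) (witt_fd j)) js) cl_one"
  have j: "j \<in> {1..m}" using Cons.prems by auto
  have X: "?X \<in> cl_alg n" by (rule foldr_alg)
  have e: "cl_mult n (witt_f k) (foldr (cl_mult n) (map (\<lambda>j. cl_mult n (witt_f j) (witt_fd j)) (j # js)) cl_one)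
      = cl_mult n (witt_f k) (cl_mult n (witt_f j) (cl_mult n (witt_fd j) ?X))"
    by (simp add: cl_mult_assoc)
  show ?case
  proof (cases "j = k")
    case True
    then show ?thesis unfolding e using F_sq[OF assms(1) cl_mult_in_alg] by simp
  next
    case False
    then have kin: "k \<in> set js" using Cons.prems by auto
    have IH: "cl_mult n (witt_f k) ?X = (\<lambda>C. 0)" using Cons.IH Cons.prems kin by auto
    have a: "cl_mult n (witt_f k) (cl_mult n (witt_fd j) ?X) = (\<lambda>C. 0)"
      using False by (simp add: AX[OF assms(1) j X] IH mul_zero_right)
    show ?thesis unfolding e AF[OF assms(1) j cl_mult_in_alg] a by (simp add: mul_zero_right)
  qed
qed

definition I0 :: cl where
  "I0 = foldr (cl_mult n) (map (\<lambda>k. cl_mult n (witt_f k) (witt_fd k)) [1..<m+1]) cl_one"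

lemma I0_alg: "I0 \<in> cl_alg n" unfolding I0_def by (rule foldr_alg)

lemma eig_I0: "eig 0 I0"
  unfolding eig_def
proof (intro conjI I0_alg)
  have "\<And>k. k \<in> {1..m} \<Longrightarrow> cl_mult n (witt_f k) I0 = (\<lambda>C. 0)"
    unfolding I0_def by (rule annih) auto
  then show "cl_mult n Nel I0 = (\<lambda>C. 0 * I0 C)"
    unfolding mul_N by (simp add: mul_zero_right)
qed

lemma eig_prod:
  assumes "set js \<subseteq> {1..m}"
  shows "eig (of_nat (length js)) (cl_mult n (foldr (cl_mult n) (map witt_fd js) cl_one) I0)"
  using assms
proof (induction js)
  case Nil then show ?case using eig_I0 I0_alg by (simp add: mul_one_left)
next
  case (Cons j js)
  then have "eig (of_nat (length js) + 1) (cl_mult n (witt_fd j) (cl_mult n (foldr (cl_mult n) (map witt_fd js) cl_one) I0))"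
    by (intro raise) auto
  then show ?case by (simp add: cl_mult_assoc add.commute)
qed

lemma lincomb_alg:
  assumes "finite I" "\<And>i. i \<in> I \<Longrightarrow> u i \<in> cl_alg n"
  shows "(\<lambda>A. \<Sum>i\<in>I. c i * u i A) \<in> cl_alg n"
  using assms by (auto simp: cl_alg_def intro!: sum.neutral)

lemma eig_lincomb:
  assumes "finite I" "\<And>i. i \<in> I \<Longrightarrow> eig r (u i)"
  shows "eig r (\<lambda>A. \<Sum>i\<in>I. c i * u i A)"
  unfolding eig_def
proof (intro conjI lincomb_alg assms(1))
  show "\<And>i. i \<in> I \<Longrightarrow> u i \<in> cl_alg n" using assms(2) by (auto simp: eig_def)
  have "\<And>i. i \<in> I \<Longrightarrow> cl_mult n Nel (u i) = (\<lambda>C. r * u i C)" using assms(2) by (auto simp: eig_def)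
  then show "cl_mult n Nel (\<lambda>A. \<Sum>i\<in>I. c i * u i A) = (\<lambda>C. r * (\<Sum>i\<in>I. c i * u i C))"
    by (simp add: mul_lin_right[OF assms(1)] sum_distrib_left algebra_simps)
qed


definition Qf :: "complex \<Rightarrow> complex \<Rightarrow> cl" where
  "Qf \<mu> x = (\<lambda>A. (1/(\<mu> - x)) * Nel A - (x/(\<mu> - x)) * cl_one A)"
definition Proj :: "complex \<Rightarrow> complex list \<Rightarrow> cl" where
  "Proj \<mu> L = foldr (cl_mult n) (map (Qf \<mu>) (filter (\<lambda>x. x \<noteq> \<mu>) L)) cl_one"

lemma Q_act:
  assumes "eig \<nu> w"
  shows "cl_mult n (Qf \<mu> x) w = (\<lambda>C. ((\<nu> - x)/(\<mu> - x)) * w C)"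
proof -
  have w: "w \<in> cl_alg n" and N: "cl_mult n Nel w = (\<lambda>C. \<nu> * w C)" using assms by (auto simp: eig_def)
  show ?thesis unfolding Qf_def mul_diff_left mul_scale_left N mul_one_left[OF w]
    by (simp add: fun_eq_iff diff_divide_distrib algebra_simps)
qed

lemma foldr_act:
  assumes "eig \<nu> w"
  shows "cl_mult n (foldr (cl_mult n) (map (Qf \<mu>) ls) cl_one) w = (\<lambda>C. (\<Prod>x\<leftarrow>ls. (\<nu> - x)/(\<mu> - x)) * w C)"
proof (induction ls)
  case Nil then show ?case using assms by (simp add: eig_def mul_one_left)
next
  case (Cons a ls)
  have "cl_mult n (foldr (cl_mult n) (map (Qf \<mu>) (a # ls)) cl_one) w
      = cl_mult n (Qf \<mu> a) (cl_mult n (foldr (cl_mult n) (map (Qf \<mu>) ls) cl_one) w)"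
    by (simp add: cl_mult_assoc)
  also have "\<dots> = (\<lambda>C. (\<Prod>x\<leftarrow>ls. (\<nu> - x)/(\<mu> - x)) * cl_mult n (Qf \<mu> a) w C)"
    by (simp only: Cons.IH mul_scale_right)
  finally show ?case by (simp add: Q_act[OF assms] algebra_simps)
qed

lemma prod_list_one: "(\<forall>x\<in>set ls. x \<noteq> \<mu>) \<Longrightarrow> (\<Prod>x\<leftarrow>ls. (\<mu> - x)/(\<mu> - (x::complex))) = 1"
  by (induction ls) auto

lemma proj_act:
  assumes "eig \<nu> w" "\<nu> \<in> set L"
  shows "cl_mult n (Proj \<mu> L) w = (if \<nu> = \<mu> then w else (\<lambda>C. 0))"
proof (cases "\<nu> = \<mu>")
  case True
  have p: "(\<Prod>x\<leftarrow>filter (\<lambda>x. x \<noteq> \<mu>) L. (\<nu> - x)/(\<mu> - x)) = 1"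
    unfolding True by (rule prod_list_one) simp
  show ?thesis unfolding Proj_def foldr_act[OF assms(1)] p using True by simp
next
  case False
  then have "(\<Prod>x\<leftarrow>filter (\<lambda>x. x \<noteq> \<mu>) L. (\<nu> - x)/(\<mu> - x)) = 0"
    using assms(2) by (auto simp: prod_list_zero_iff)
  then show ?thesis using False unfolding Proj_def foldr_act[OF assms(1)] by simp
qed

lemma proj_sum:
  assumes R: "finite R" and e: "\<And>r. r \<in> R \<Longrightarrow> eig (lam r) (X r)" and inj: "inj_on lam R"
    and L: "\<And>r. r \<in> R \<Longrightarrow> lam r \<in> set L" and r0: "r0 \<in> R"
  shows "cl_mult n (Proj (lam r0) L) (\<lambda>C. \<Sum>r\<in>R. X r C) = X r0"
proof (rule ext)
  fix C
  have "cl_mult n (Proj (lam r0) L) (\<lambda>C. \<Sum>r\<in>R. X r C) C = (\<Sum>r\<in>R. cl_mult n (Proj (lam r0) L) (X r) C)"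
    by (simp add: mul_sum_right[OF R])
  also have "\<dots> = (\<Sum>r\<in>R. if r = r0 then X r C else 0)"
  proof (rule sum.cong[OF refl])
    fix r assume r: "r \<in> R"
    have "(lam r = lam r0) = (r = r0)" using inj r r0 by (auto dest: inj_onD)
    then show "cl_mult n (Proj (lam r0) L) (X r) C = (if r = r0 then X r C else 0)"
      by (simp add: proj_act[OF e[OF r] L[OF r]])
  qed
  also have "\<dots> = X r0 C" using R r0 by (simp add: sum.delta)
  finally show "cl_mult n (Proj (lam r0) L) (\<lambda>C. \<Sum>r\<in>R. X r C) C = X r0 C" .
qed

lemma sep_sum:
  assumes R: "finite R" and e: "\<And>r. r \<in> R \<Longrightarrow> eig (lam r) (X r)" and inj: "inj_on lam R"
    and L: "\<And>r. r \<in> R \<Longrightarrow> lam r \<in> set L" and z: "(\<lambda>C. \<Sum>r\<in>R. X r C) = (\<lambda>C. 0)" and r0: "r0 \<in> R"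
  shows "X r0 = (\<lambda>C. 0)"
  using proj_sum[OF R e inj L r0] z by (simp add: mul_zero_right)

lemma sep_two:
  assumes "eig a X" "eig b Y" "a \<noteq> b" "a \<in> set L" "b \<in> set L" "X = Y"
  shows "X = (\<lambda>C. 0)"
proof -
  have "cl_mult n (Proj a L) X = X" using proj_act[OF assms(1,4)] by simp
  moreover have "cl_mult n (Proj a L) Y = (\<lambda>C. 0)" using proj_act[OF assms(2,5)] assms(3) by simp
  ultimately show ?thesis using assms(6) by simp
qed

end


definition cdiff :: "(real^'n \<Rightarrow> cl) \<Rightarrow> real^'n \<Rightarrow> bool" where
  "cdiff G x \<longleftrightarrow> (\<forall>A. (\<lambda>y. G y A) differentiable (at x))"

lemma mul_expand:
  "cl_mult n a v C = (\<Sum>A\<in>blades n. \<Sum>B\<in>blades n. (if (A - B) \<union> (B - A) = C then blade_sign A B * a A else 0) * v B)"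
  unfolding cl_mult_def by (intro sum.cong refl) auto

lemma fd_works: "(\<lambda>y. G y A) differentiable (at x) \<Longrightarrow>
  ((\<lambda>y. G y A) has_derivative frechet_derivative (\<lambda>y. G y A) (at x)) (at x)"
  using frechet_derivative_works by blast

lemma PD1:
  assumes "cdiff G x"
  shows "cdiff (\<lambda>y. cl_mult n a (G y)) x" "pder idx (\<lambda>y. cl_mult n a (G y)) \<alpha> x = cl_mult n a (pder idx G \<alpha> x)"
proof -
  let ?k = "\<lambda>C A B. (if (A - B) \<union> (B - A) = C then blade_sign A B * a A else 0)"
  have hd: "((\<lambda>y. cl_mult n a (G y) C) has_derivative
      (\<lambda>h. \<Sum>A\<in>blades n. \<Sum>B\<in>blades n. ?k C A B * frechet_derivative (\<lambda>y. G y B) (at x) h)) (at x)" for C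
    unfolding mul_expand
    using assms unfolding cdiff_def
    by (intro has_derivative_sum has_derivative_mult_right fd_works) auto
  show "cdiff (\<lambda>y. cl_mult n a (G y)) x" unfolding cdiff_def using hd by (auto simp: differentiable_def)
  show "pder idx (\<lambda>y. cl_mult n a (G y)) \<alpha> x = cl_mult n a (pder idx G \<alpha> x)"
  proof (rule ext)
    fix C
    show "pder idx (\<lambda>y. cl_mult n a (G y)) \<alpha> x C = cl_mult n a (pder idx G \<alpha> x) C"
    proof -
      have e: "frechet_derivative (\<lambda>y. cl_mult n a (G y) C) (at x) =
          (\<lambda>h. \<Sum>A\<in>blades n. \<Sum>B\<in>blades n. ?k C A B * frechet_derivative (\<lambda>y. G y B) (at x) h)"
        by (rule frechet_derivative_at[OF hd, symmetric])
      show ?thesis unfolding pder_def e by (simp only: mul_expand)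
    qed
  qed
qed

lemma PD2:
  assumes "finite R" "\<And>r. r \<in> R \<Longrightarrow> cdiff (G r) x"
  shows "cdiff (\<lambda>y A. \<Sum>r\<in>R. G r y A) x" "pder idx (\<lambda>y A. \<Sum>r\<in>R. G r y A) \<alpha> x = (\<lambda>A. \<Sum>r\<in>R. pder idx (G r) \<alpha> x A)"
proof -
  have hd: "((\<lambda>y. \<Sum>r\<in>R. G r y A) has_derivative (\<lambda>h. \<Sum>r\<in>R. frechet_derivative (\<lambda>y. G r y A) (at x) h)) (at x)" for A
    using assms(2) unfolding cdiff_def by (intro has_derivative_sum fd_works) auto
  show "cdiff (\<lambda>y A. \<Sum>r\<in>R. G r y A) x" unfolding cdiff_def using hd by (auto simp: differentiable_def)
  show "pder idx (\<lambda>y A. \<Sum>r\<in>R. G r y A) \<alpha> x = (\<lambda>A. \<Sum>r\<in>R. pder idx (G r) \<alpha> x A)"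
    unfolding pder_def using frechet_derivative_at[OF hd] by (auto simp: fun_eq_iff)
qed

lemma PD3:
  assumes "cdiff G x"
  shows "pder idx (\<lambda>y A. c * G y A) \<alpha> x = (\<lambda>A. c * pder idx G \<alpha> x A)"
proof -
  have hd: "((\<lambda>y. c * G y A) has_derivative (\<lambda>h. c * frechet_derivative (\<lambda>y. G y A) (at x) h)) (at x)" for A
    using assms unfolding cdiff_def by (intro has_derivative_mult_right fd_works) auto
  show ?thesis unfolding pder_def using frechet_derivative_at[OF hd] by (auto simp: fun_eq_iff)
qed

lemma PD4:
  assumes "open \<Omega>" "x \<in> \<Omega>" "\<And>y. y \<in> \<Omega> \<Longrightarrow> G y = H y" "cdiff H x"
  shows "cdiff G x" "pder idx G \<alpha> x = pder idx H \<alpha> x"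
proof -
  have hd: "((\<lambda>y. G y A) has_derivative frechet_derivative (\<lambda>y. H y A) (at x)) (at x)" for A
    using assms(4) unfolding cdiff_def
    by (intro has_derivative_transform_within_open[OF fd_works assms(1,2)]) (auto simp: assms(3))
  show "cdiff G x" unfolding cdiff_def using hd by (auto simp: differentiable_def)
  show "pder idx G \<alpha> x = pder idx H \<alpha> x"
    unfolding pder_def using frechet_derivative_at[OF hd] by (auto simp: fun_eq_iff)
qed

lemma PD5:
  assumes "open \<Omega>" "x \<in> \<Omega>" "\<And>y. y \<in> \<Omega> \<Longrightarrow> G y \<in> cl_alg n"
  shows "pder idx G \<alpha> x \<in> cl_alg n"
  unfolding cl_alg_def mem_Collect_eq
proof (intro allI impI)
  fix A assume A: "A \<notin> blades n"
  have hd: "((\<lambda>y. G y A) has_derivative (\<lambda>h. 0)) (at x)"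
    by (rule has_derivative_transform_within_open[OF has_derivative_const assms(1,2)])
       (use assms(3) A in \<open>auto simp: cl_alg_def\<close>)
  show "pder idx G \<alpha> x A = 0" unfolding pder_def frechet_derivative_at[OF hd, symmetric] by simp
qed


lemma pair_sum: "(\<Sum>\<alpha>\<in>{1..2*(m::nat)}. g \<alpha>) = (\<Sum>k\<in>{1..m}. g (2*k-1) + g (2*k))"
proof (induction m)
  case 0 then show ?case by simp
next
  case (Suc m)
  have e: "{1..2 * Suc m} = insert (2*m+2) (insert (2*m+1) {1..2*m})" by auto
  have "(\<Sum>\<alpha>\<in>{1..2*Suc m}. g \<alpha>) = g (2*m+2) + (g (2*m+1) + (\<Sum>\<alpha>\<in>{1..2*m}. g \<alpha>))"
    unfolding e by simp
  also have "\<dots> = (\<Sum>k\<in>{1..Suc m}. g (2*k-1) + g (2*k))"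
    using Suc.IH by (simp add: ac_simps)
  finally show ?case .
qed

lemma gen_split:
  assumes "1 \<le> k"
  shows "gen (2*k-1) = (\<lambda>A. witt_fd k A - witt_f k A)" "gen (2*k) = (\<lambda>A. -\<i> * (witt_f k A + witt_fd k A))"
  by (auto simp: fun_eq_iff witt_f_def witt_fd_def cl_scale_def cl_add_def algebra_simps)

lemma mapI_vals:
  assumes "1 \<le> k"
  shows "mapI (2*k-1) = gen (2*k)" "mapI (2*k) = (\<lambda>A. -1 * gen (2*k-1) A)"
  using assms by (auto simp: mapI_def cl_scale_def)

context wsetup
begin

definition Dp :: "(nat \<Rightarrow> cl) \<Rightarrow> cl" where
  "Dp D = (\<lambda>C. \<Sum>k\<in>{1..m}. cl_mult n (witt_fd k) (\<lambda>B. D (2*k-1) B - \<i> * D (2*k) B) C)"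
definition Dm :: "(nat \<Rightarrow> cl) \<Rightarrow> cl" where
  "Dm D = (\<lambda>C. \<Sum>k\<in>{1..m}. cl_mult n (witt_f k) (\<lambda>B. D (2*k-1) B + \<i> * D (2*k) B) C)"

lemma dec_gen:
  assumes "n = 2*m"
  shows "(\<lambda>C. \<Sum>\<alpha>\<in>{1..n}. cl_mult n (gen \<alpha>) (D \<alpha>) C) = (\<lambda>C. Dp D C - Dm D C)"
proof (rule ext)
  fix C
  have "(\<Sum>\<alpha>\<in>{1..n}. cl_mult n (gen \<alpha>) (D \<alpha>) C)
      = (\<Sum>k\<in>{1..m}. cl_mult n (gen (2*k-1)) (D (2*k-1)) C + cl_mult n (gen (2*k)) (D (2*k)) C)"
    unfolding assms by (rule pair_sum)
  also have "\<dots> = (\<Sum>k\<in>{1..m}. cl_mult n (witt_fd k) (\<lambda>B. D (2*k-1) B - \<i> * D (2*k) B) C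
                   - cl_mult n (witt_f k) (\<lambda>B. D (2*k-1) B + \<i> * D (2*k) B) C)"
  proof (rule sum.cong[OF refl])
    fix k assume "k \<in> {1..m}"
    then have k: "1 \<le> k" by auto
    show "cl_mult n (gen (2*k-1)) (D (2*k-1)) C + cl_mult n (gen (2*k)) (D (2*k)) C
       = cl_mult n (witt_fd k) (\<lambda>B. D (2*k-1) B - \<i> * D (2*k) B) C
                   - cl_mult n (witt_f k) (\<lambda>B. D (2*k-1) B + \<i> * D (2*k) B) C"
      unfolding gen_split[OF k] mul_diff_left mul_scale_left mul_add_left mul_diff_right mul_add_right mul_scale_right
      by (simp add: algebra_simps)
  qed
  also have "\<dots> = Dp D C - Dm D C" unfolding Dp_def Dm_def by (simp add: sum_subtractf)
  finally show "(\<Sum>\<alpha>\<in>{1..n}. cl_mult n (gen \<alpha>) (D \<alpha>) C) = Dp D C - Dm D C" .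
qed

lemma dec_I:
  assumes "n = 2*m"
  shows "(\<lambda>C. \<Sum>\<alpha>\<in>{1..n}. cl_mult n (mapI \<alpha>) (D \<alpha>) C) = (\<lambda>C. -\<i> * (Dp D C + Dm D C))"
proof (rule ext)
  fix C
  have "(\<Sum>\<alpha>\<in>{1..n}. cl_mult n (mapI \<alpha>) (D \<alpha>) C)
      = (\<Sum>k\<in>{1..m}. cl_mult n (mapI (2*k-1)) (D (2*k-1)) C + cl_mult n (mapI (2*k)) (D (2*k)) C)"
    unfolding assms by (rule pair_sum)
  also have "\<dots> = (\<Sum>k\<in>{1..m}. -\<i> * (cl_mult n (witt_fd k) (\<lambda>B. D (2*k-1) B - \<i> * D (2*k) B) C
                   + cl_mult n (witt_f k) (\<lambda>B. D (2*k-1) B + \<i> * D (2*k) B) C))"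
  proof (rule sum.cong[OF refl])
    fix k assume "k \<in> {1..m}"
    then have k: "1 \<le> k" by auto
    show "cl_mult n (mapI (2*k-1)) (D (2*k-1)) C + cl_mult n (mapI (2*k)) (D (2*k)) C
       = -\<i> * (cl_mult n (witt_fd k) (\<lambda>B. D (2*k-1) B - \<i> * D (2*k) B) C
                   + cl_mult n (witt_f k) (\<lambda>B. D (2*k-1) B + \<i> * D (2*k) B) C)"
      unfolding mapI_vals[OF k] gen_split[OF k] mul_diff_left mul_scale_left mul_add_left mul_diff_right mul_add_right mul_scale_right
      by (simp add: algebra_simps)
  qed
  also have "\<dots> = -\<i> * (Dp D C + Dm D C)" unfolding Dp_def Dm_def by (simp only: mult_minus_left sum_negf sum_distrib_left[symmetric] sum.distrib)
  finally show "(\<Sum>\<alpha>\<in>{1..n}. cl_mult n (mapI \<alpha>) (D \<alpha>) C) = -\<i> * (Dp D C + Dm D C)" .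
qed

lemma eig_sum:
  assumes "finite I" "\<And>i. i \<in> I \<Longrightarrow> eig r (u i)"
  shows "eig r (\<lambda>A. \<Sum>i\<in>I. u i A)"
  using eig_lincomb[OF assms, where c = "\<lambda>_. 1"] by simp

lemma eig_comb:
  assumes "eig r X" "eig r Y"
  shows "eig r (\<lambda>B. X B + c * Y B)" "eig r (\<lambda>B. X B - c * Y B)"
  using assms unfolding eig_def cl_alg_def
  by (auto simp: mul_add_right mul_diff_right mul_scale_right fun_eq_iff algebra_simps)

lemma eig_Dp:
  assumes "n = 2*m" "\<And>\<beta>. \<beta> \<in> {1..n} \<Longrightarrow> eig r (D \<beta>)"
  shows "eig (r + 1) (Dp D)" "eig (r - 1) (Dm D)"
proof -
  have e: "eig r (D (2*k-1))" "eig r (D (2*k))" if "k \<in> {1..m}" for k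
  proof -
    have "2*k-1 \<in> {1..n}" "2*k \<in> {1..n}" using that assms(1) by auto
    then show "eig r (D (2*k-1))" "eig r (D (2*k))" by (auto intro: assms(2))
  qed
  show "eig (r + 1) (Dp D)" unfolding Dp_def
    by (intro eig_sum raise eig_comb e) auto
  show "eig (r - 1) (Dm D)" unfolding Dm_def
    by (intro eig_sum lower eig_comb e) auto
qed

end



lemma reorg:
  "(\<lambda>C. \<Sum>\<alpha>\<in>{1..n}. cl_mult n (\<lambda>A. \<Sum>\<beta>\<in>{1..n}. c \<alpha> \<beta> * M \<beta> A) (D \<alpha>) C)
   = (\<lambda>C. \<Sum>\<beta>\<in>{1..n}. cl_mult n (M \<beta>) (\<lambda>B. \<Sum>\<alpha>\<in>{1..n}. c \<alpha> \<beta> * D \<alpha> B) C)"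
  by (simp add: mul_lin_left mul_lin_right sum_distrib_left fun_eq_iff) (intro allI sum.swap)

lemma gen_delta_sum:
  assumes "\<gamma> \<in> {1..n}"
  shows "(\<lambda>A. \<Sum>\<beta>\<in>{1..n}. (s * gen \<gamma> {\<beta>}) * gen \<beta> A) = (\<lambda>A. s * gen \<gamma> A)"
proof (rule ext)
  fix A
  have "(\<Sum>\<beta>\<in>{1..n}. (s * gen \<gamma> {\<beta>}) * gen \<beta> A) = (\<Sum>\<beta>\<in>{1..n}. if \<beta> = \<gamma> then s * gen \<beta> A else 0)"
    by (intro sum.cong refl) (auto simp: gen_def)
  also have "\<dots> = s * gen \<gamma> A" using assms by (simp add: sum.delta)
  finally show "(\<Sum>\<beta>\<in>{1..n}. (s * gen \<gamma> {\<beta>}) * gen \<beta> A) = s * gen \<gamma> A" .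
qed

lemma mapJ_form:
  assumes "\<alpha> \<in> {1..4*p}"
  shows "\<exists>s \<gamma>. \<gamma> \<in> {1..4*p} \<and> mapJ \<alpha> = (\<lambda>A. s * gen \<gamma> A)"
proof -
  have "\<alpha> mod 4 = 1 \<or> \<alpha> mod 4 = 2 \<or> \<alpha> mod 4 = 3 \<or> \<alpha> mod 4 = 0" by arith
  moreover {
    assume h: "\<alpha> mod 4 = 1"
    then have "\<alpha> + 2 \<in> {1..4*p}" using assms by (auto; presburger)
    then have ?thesis using h by (intro exI[of _ 1] exI[of _ "\<alpha> + 2"]) (auto simp: mapJ_def)
  } moreover {
    assume h: "\<alpha> mod 4 = 2"
    then have "\<alpha> + 2 \<in> {1..4*p}" using assms by (auto; presburger)
    then have ?thesis using h by (intro exI[of _ "-1"] exI[of _ "\<alpha> + 2"]) (auto simp: mapJ_def cl_scale_def)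
  } moreover {
    assume h: "\<alpha> mod 4 = 3"
    then have "\<alpha> - 2 \<in> {1..4*p}" using assms by (auto; presburger)
    then have ?thesis using h by (intro exI[of _ "-1"] exI[of _ "\<alpha> - 2"]) (auto simp: mapJ_def cl_scale_def)
  } moreover {
    assume h: "\<alpha> mod 4 = 0"
    then have "\<alpha> - 2 \<in> {1..4*p}" using assms by (auto; presburger)
    then have ?thesis using h by (intro exI[of _ 1] exI[of _ "\<alpha> - 2"]) (auto simp: mapJ_def)
  }
  ultimately show ?thesis by meson
qed

lemma mapJ_lin:
  assumes "\<alpha> \<in> {1..4*p}"
  shows "mapJ \<alpha> = (\<lambda>A. \<Sum>\<beta>\<in>{1..4*p}. mapJ \<alpha> {\<beta>} * gen \<beta> A)"
proof -
  obtain s \<gamma> where g: "\<gamma> \<in> {1..4*p}" and e: "mapJ \<alpha> = (\<lambda>A. s * gen \<gamma> A)"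
    using mapJ_form[OF assms] by blast
  show ?thesis unfolding e using gen_delta_sum[OF g, of s] by simp
qed

lemma mapK_lin: "mapK n \<alpha> = (\<lambda>A. \<Sum>\<beta>\<in>{1..n}. mapJ \<alpha> {\<beta>} * mapI \<beta> A)"
  by (simp add: mapK_def lin_ext_def)

locale psetup =
  fixes p :: nat
begin

sublocale W: wsetup "4*p" "2*p" by unfold_locales simp

lemma idemI_eq: "idemI p = W.I0"
  by (simp add: idemI_def W.I0_def cl_prod_list_def)

lemma spin_basis_eig:
  assumes "J \<subseteq> {1..2*p}"
  shows "W.eig (of_nat (card J)) (spin_basis p J)"
proof -
  have f: "finite J" using assms finite_subset by blast
  have "W.eig (of_nat (length (sorted_list_of_set J))) (cl_mult (4*p) (foldr (cl_mult (4*p)) (map witt_fd (sorted_list_of_set J)) cl_one) W.I0)"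
    by (rule W.eig_prod) (use f assms in auto)
  then show ?thesis using f by (simp add: spin_basis_def cl_prod_list_def idemI_eq)
qed

lemma Sr_props:
  assumes "v \<in> spinor_r p r"
  shows "W.eig (of_nat r) v" "v \<in> spinor p"
proof -
  let ?JJ = "{J. J \<subseteq> {1..2*p} \<and> card J = r}"
  obtain c where v: "v = (\<lambda>A. \<Sum>J\<in>?JJ. c J * spin_basis p J A)" using assms by (auto simp: spinor_r_def)
  have fin: "finite ?JJ" by (rule finite_subset[of _ "Pow {1..2*p}"]) auto
  show "W.eig (of_nat r) v" unfolding v
    by (rule W.eig_lincomb[OF fin]) (use spin_basis_eig in auto)
  let ?a = "\<lambda>A. \<Sum>J\<in>?JJ. c J * cl_prod_list (4*p) (map witt_fd (sorted_list_of_set J)) A"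
  have a: "?a \<in> cl_alg (4*p)"
    by (rule W.lincomb_alg[OF fin]) (simp add: cl_prod_list_def W.foldr_alg)
  have "cl_mult (4*p) ?a (idemI p) = v"
    unfolding v mul_lin_left[OF fin] by (simp add: spin_basis_def)
  then show "v \<in> spinor p" using a unfolding spinor_def by blast
qed

end

context wsetup
begin

lemma pair_zero:
  assumes R: "finite R" and inj: "inj_on lam R"
    and eP: "\<And>r. r \<in> R \<Longrightarrow> eig (lam r + 1) (P r)" and eQ: "\<And>r. r \<in> R \<Longrightarrow> eig (lam r - 1) (Q r)"
    and L: "\<And>r. r \<in> R \<Longrightarrow> lam r + 1 \<in> set L \<and> lam r - 1 \<in> set L"
    and z1: "(\<lambda>C. \<Sum>r\<in>R. P r C - Q r C) = (\<lambda>C. 0)"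
    and z2: "(\<lambda>C. \<Sum>r\<in>R. -\<i> * (P r C + Q r C)) = (\<lambda>C. 0)"
    and r0: "r0 \<in> R"
  shows "P r0 = (\<lambda>C. 0) \<and> Q r0 = (\<lambda>C. 0)"
proof -
  have a: "(\<Sum>r\<in>R. P r C) - (\<Sum>r\<in>R. Q r C) = 0" for C
    using fun_cong[OF z1, of C] by (simp add: sum_subtractf)
  have b: "(\<Sum>r\<in>R. P r C) + (\<Sum>r\<in>R. Q r C) = 0" for C
  proof -
    have "(\<Sum>r\<in>R. -\<i> * (P r C + Q r C)) = -\<i> * ((\<Sum>r\<in>R. P r C) + (\<Sum>r\<in>R. Q r C))"
      by (simp only: sum_distrib_left[symmetric] sum.distrib)
    then show ?thesis using fun_cong[OF z2, of C] by simp
  qed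
  have zP: "(\<lambda>C. \<Sum>r\<in>R. P r C) = (\<lambda>C. 0)" and zQ: "(\<lambda>C. \<Sum>r\<in>R. Q r C) = (\<lambda>C. 0)"
  proof -
    show "(\<lambda>C. \<Sum>r\<in>R. P r C) = (\<lambda>C. 0)"
    proof (rule ext)
      fix C show "(\<Sum>r\<in>R. P r C) = 0" using a[of C] b[of C] by (simp add: algebra_simps)
    qed
    show "(\<lambda>C. \<Sum>r\<in>R. Q r C) = (\<lambda>C. 0)"
    proof (rule ext)
      fix C show "(\<Sum>r\<in>R. Q r C) = 0" using a[of C] b[of C] by (simp add: algebra_simps)
    qed
  qed
  have i1: "inj_on (\<lambda>r. lam r + 1) R" using inj by (auto simp: inj_on_def)
  have i2: "inj_on (\<lambda>r. lam r - 1) R" using inj by (auto simp: inj_on_def)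
  show ?thesis
    using sep_sum[OF R eP i1 _ zP r0] sep_sum[OF R eQ i2 _ zQ r0] L by auto
qed

lemma single_zero:
  assumes "eig (a + 1) P" "eig (a - 1) Q" "a + 1 \<in> set L" "a - 1 \<in> set L"
    and z: "(\<lambda>C. P C - Q C) = (\<lambda>C. 0)"
  shows "P = (\<lambda>C. 0) \<and> Q = (\<lambda>C. 0)"
proof -
  have PQ: "P = Q" using z by (auto simp: fun_eq_iff dest: fun_cong)
  have "P = (\<lambda>C. 0)" by (rule sep_two[OF assms(1,2) _ assms(3,4) PQ]) simp
  then show ?thesis using PQ by simp
qed

end


context psetup
begin

lemma main:
  fixes idx :: "nat \<Rightarrow> 'n::finite" and \<Omega> :: "(real^'n) set" and Fc :: "nat \<Rightarrow> real^'n \<Rightarrow> cl"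
  assumes region: "open \<Omega>"
    and comps: "\<forall>r\<le>2*p. \<forall>x\<in>\<Omega>. Fc r x \<in> spinor_r p r"
    and diff: "\<forall>A. (\<lambda>x. \<Sum>r\<le>2*p. Fc r x A) differentiable_on \<Omega>"
  shows "(q_monogenic p idx \<Omega> (\<lambda>x A. \<Sum>r\<le>2*p. Fc r x A)
            \<longleftrightarrow> (\<forall>r\<le>2*p. q_monogenic p idx \<Omega> (Fc r)))
       \<and> ((\<forall>r\<le>2*p. q_monogenic p idx \<Omega> (Fc r))
            \<longleftrightarrow> (\<forall>r\<le>2*p. M_monogenic (4*p) idx gen \<Omega> (Fc r)
                           \<and> M_monogenic (4*p) idx mapJ \<Omega> (Fc r)))"
proof -
  define R where "R = {..2*p}"
  define L where "L = map (of_int :: int \<Rightarrow> complex) [-1..int(2*p)+1]"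
  define F where "F = (\<lambda>y A. \<Sum>r\<in>R. Fc r y A)"
  have finR: "finite R" by (simp add: R_def)
  have injR: "inj_on (of_nat :: nat \<Rightarrow> complex) R" by (auto simp: inj_on_def)
  have Lmem: "of_nat r \<in> set L" "of_nat r + 1 \<in> set L" "of_nat r - 1 \<in> set L" if "r \<in> R" for r
  proof -
    have m: "int r \<in> {-1..int(2*p)+1}" "int r + 1 \<in> {-1..int(2*p)+1}" "int r - 1 \<in> {-1..int(2*p)+1}"
    proof -
      have "int r \<le> int (2*p)" using that by (simp add: R_def)
      then show "int r \<in> {-1..int(2*p)+1}" "int r + 1 \<in> {-1..int(2*p)+1}" "int r - 1 \<in> {-1..int(2*p)+1}"
        by auto
    qed
    show "of_nat r \<in> set L" unfolding L_def set_map set_upto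
      by (rule image_eqI[where x="int r"]) (simp, fact m(1))
    show "of_nat r + 1 \<in> set L" unfolding L_def set_map set_upto
      by (rule image_eqI[where x="int r + 1"]) (simp, fact m(2))
    show "of_nat r - 1 \<in> set L" unfolding L_def set_map set_upto
      by (rule image_eqI[where x="int r - 1"]) (simp, fact m(3))
  qed
  have eigF: "W.eig (of_nat r) (Fc r y)" "Fc r y \<in> spinor p" if "r \<in> R" "y \<in> \<Omega>" for r y
  proof -
    have "Fc r y \<in> spinor_r p r" using comps that by (auto simp: R_def)
    then show "W.eig (of_nat r) (Fc r y)" "Fc r y \<in> spinor p" by (rule Sr_props)+
  qed
  have spF: "F y \<in> spinor p" if "y \<in> \<Omega>" for y
  proof -
    have "\<forall>r\<in>R. \<exists>a. a \<in> cl_alg (4*p) \<and> Fc r y = cl_mult (4*p) a (idemI p)"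
      using eigF(2) that by (auto simp: spinor_def)
    then obtain a where a: "\<And>r. r \<in> R \<Longrightarrow> a r \<in> cl_alg (4*p) \<and> Fc r y = cl_mult (4*p) (a r) (idemI p)"
      by metis
    have "F y = cl_mult (4*p) (\<lambda>A. \<Sum>r\<in>R. a r A) (idemI p)"
      unfolding F_def mul_sum_left[OF finR] using a by (auto simp: fun_eq_iff intro!: sum.cong)
    moreover have "(\<lambda>A. \<Sum>r\<in>R. a r A) \<in> cl_alg (4*p)"
      using a by (auto simp: cl_alg_def intro!: sum.neutral)
    ultimately show ?thesis by (auto simp: spinor_def)
  qed
  have projF: "Fc r y = cl_mult (4*p) (W.Proj (of_nat r) L) (F y)" if "r \<in> R" "y \<in> \<Omega>" for r y
    unfolding F_def using W.proj_sum[OF finR _ injR _ that(1), of "\<lambda>r. Fc r y" L] eigF(1)[OF _ that(2)] Lmem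
    by auto
  have cdF: "cdiff F x" if "x \<in> \<Omega>" for x
    using diff region that unfolding cdiff_def F_def R_def by (simp add: differentiable_on_eq_differentiable_at)
  have cdFc: "cdiff (Fc r) x" if "r \<in> R" "x \<in> \<Omega>" for r x
    by (rule PD4(1)[OF region that(2), of "Fc r" "\<lambda>y. cl_mult (4*p) (W.Proj (of_nat r) L) (F y)"])
       (auto intro: projF[OF that(1)] PD1 cdF[OF that(2)])
  have eigD: "W.eig (of_nat r) (pder idx (Fc r) \<alpha> x)" if "r \<in> R" "x \<in> \<Omega>" for r x \<alpha>
  proof -
    have alg: "pder idx (Fc r) \<alpha> x \<in> cl_alg (4*p)"
      by (rule PD5[OF region that(2)]) (use eigF(1)[OF that(1)] in \<open>auto simp: W.eig_def\<close>)
    have "cl_mult (4*p) W.Nel (pder idx (Fc r) \<alpha> x) = pder idx (\<lambda>y. cl_mult (4*p) W.Nel (Fc r y)) \<alpha> x"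
      by (rule PD1(2)[OF cdFc[OF that], symmetric])
    also have "\<dots> = pder idx (\<lambda>y A. of_nat r * Fc r y A) \<alpha> x"
      by (rule PD4(2)[OF region that(2), symmetric])
         (auto intro: PD1(1)[OF cdFc[OF that]] dest: eigF(1)[OF that(1)] simp: W.eig_def)
    also have "\<dots> = (\<lambda>A. of_nat r * pder idx (Fc r) \<alpha> x A)" by (rule PD3[OF cdFc[OF that]])
    finally show ?thesis using alg by (simp add: W.eig_def)
  qed
  have dirF: "dirac (4*p) idx M F x = (\<lambda>C. \<Sum>r\<in>R. dirac (4*p) idx M (Fc r) x C)" if "x \<in> \<Omega>" for M x
  proof -
    have e: "pder idx F \<alpha> x = (\<lambda>A. \<Sum>r\<in>R. pder idx (Fc r) \<alpha> x A)" for \<alpha>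
      unfolding F_def by (rule PD2(2)[OF finR]) (rule cdFc[OF _ that])
    show ?thesis unfolding dirac_def e mul_sum_right[OF finR] by (rule ext) (rule sum.swap)
  qed
  define DD where "DD = (\<lambda>x r \<alpha>. pder idx (Fc r) \<alpha> x)"
  define DJ where "DJ = (\<lambda>x r \<beta> B. \<Sum>\<alpha>\<in>{1..4*p}. mapJ \<alpha> {\<beta>} * pder idx (Fc r) \<alpha> x B)"
  have n2m: "4*p = 2*(2*p)" by simp
  have dec1: "dirac (4*p) idx gen (Fc r) x = (\<lambda>C. W.Dp (DD x r) C - W.Dm (DD x r) C)" for r x
    unfolding dirac_def DD_def by (rule W.dec_gen[OF n2m])
  have dec2: "dirac (4*p) idx mapI (Fc r) x = (\<lambda>C. -\<i> * (W.Dp (DD x r) C + W.Dm (DD x r) C))" for r x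
    unfolding dirac_def DD_def by (rule W.dec_I[OF n2m])
  have dec3: "dirac (4*p) idx mapJ (Fc r) x = (\<lambda>C. W.Dp (DJ x r) C - W.Dm (DJ x r) C)" for r x
  proof -
    have "dirac (4*p) idx mapJ (Fc r) x = (\<lambda>C. \<Sum>\<alpha>\<in>{1..4*p}. cl_mult (4*p) (\<lambda>A. \<Sum>\<beta>\<in>{1..4*p}. mapJ \<alpha> {\<beta>} * gen \<beta> A) (pder idx (Fc r) \<alpha> x) C)"
      unfolding dirac_def
    proof (rule ext, rule sum.cong[OF refl])
      fix C \<alpha> assume a: "\<alpha> \<in> {1..4*p}"
      show "cl_mult (4*p) (mapJ \<alpha>) (pder idx (Fc r) \<alpha> x) C = cl_mult (4*p) (\<lambda>A. \<Sum>\<beta>\<in>{1..4*p}. mapJ \<alpha> {\<beta>} * gen \<beta> A) (pder idx (Fc r) \<alpha> x) C"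
        by (rule arg_cong[where f="\<lambda>M. cl_mult (4*p) M (pder idx (Fc r) \<alpha> x) C"]) (rule mapJ_lin[OF a])
    qed
    also have "\<dots> = (\<lambda>C. \<Sum>\<beta>\<in>{1..4*p}. cl_mult (4*p) (gen \<beta>) (DJ x r \<beta>) C)"
      unfolding DJ_def by (rule reorg)
    also have "\<dots> = (\<lambda>C. W.Dp (DJ x r) C - W.Dm (DJ x r) C)" by (rule W.dec_gen[OF n2m])
    finally show ?thesis .
  qed
  have dec4: "dirac (4*p) idx (mapK (4*p)) (Fc r) x = (\<lambda>C. -\<i> * (W.Dp (DJ x r) C + W.Dm (DJ x r) C))" for r x
  proof -
    have "dirac (4*p) idx (mapK (4*p)) (Fc r) x = (\<lambda>C. \<Sum>\<beta>\<in>{1..4*p}. cl_mult (4*p) (mapI \<beta>) (DJ x r \<beta>) C)"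
      unfolding dirac_def mapK_lin DJ_def by (rule reorg)
    also have "\<dots> = (\<lambda>C. -\<i> * (W.Dp (DJ x r) C + W.Dm (DJ x r) C))" by (rule W.dec_I[OF n2m])
    finally show ?thesis .
  qed
  have eDD: "W.eig (of_nat r + 1) (W.Dp (DD x r))" "W.eig (of_nat r - 1) (W.Dm (DD x r))" if "r \<in> R" "x \<in> \<Omega>" for r x
    using W.eig_Dp[OF n2m, where D = "DD x r" and r = "of_nat r"] eigD[OF that] by (auto simp: DD_def)
  have eDJ: "W.eig (of_nat r + 1) (W.Dp (DJ x r))" "W.eig (of_nat r - 1) (W.Dm (DJ x r))" if "r \<in> R" "x \<in> \<Omega>" for r x
  proof -
    have "W.eig (of_nat r) (DJ x r \<beta>)" for \<beta>
      unfolding DJ_def by (rule W.eig_lincomb) (auto intro: eigD[OF that])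
    then show "W.eig (of_nat r + 1) (W.Dp (DJ x r))" "W.eig (of_nat r - 1) (W.Dm (DJ x r))"
      using W.eig_Dp[OF n2m, where D = "DJ x r" and r = "of_nat r"] by auto
  qed
  have zero_iff: "M_monogenic (4*p) idx M \<Omega> G \<longleftrightarrow> (\<forall>x\<in>\<Omega>. dirac (4*p) idx M G x = (\<lambda>C. 0))" for M G
    by (simp add: M_monogenic_def cl_zero_def)
  have split: "(M_monogenic (4*p) idx M1 \<Omega> F \<and> M_monogenic (4*p) idx M2 \<Omega> F) \<longleftrightarrow>
      (\<forall>r\<in>R. M_monogenic (4*p) idx M1 \<Omega> (Fc r) \<and> M_monogenic (4*p) idx M2 \<Omega> (Fc r))"
    if d1: "\<And>r x. dirac (4*p) idx M1 (Fc r) x = (\<lambda>C. P x r C - Q x r C)"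
    and d2: "\<And>r x. dirac (4*p) idx M2 (Fc r) x = (\<lambda>C. -\<i> * (P x r C + Q x r C))"
    and eP: "\<And>r x. r \<in> R \<Longrightarrow> x \<in> \<Omega> \<Longrightarrow> W.eig (of_nat r + 1) (P x r)"
    and eQ: "\<And>r x. r \<in> R \<Longrightarrow> x \<in> \<Omega> \<Longrightarrow> W.eig (of_nat r - 1) (Q x r)"
    for M1 M2 P Q
  proof
    assume h: "M_monogenic (4*p) idx M1 \<Omega> F \<and> M_monogenic (4*p) idx M2 \<Omega> F"
    have z: "P x r = (\<lambda>C. 0) \<and> Q x r = (\<lambda>C. 0)" if "x \<in> \<Omega>" "r \<in> R" for x r
    proof (rule W.pair_zero[OF finR injR, where L = L])
      show "\<And>r. r \<in> R \<Longrightarrow> W.eig (of_nat r + 1) (P x r)" using eP that by auto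
      show "\<And>r. r \<in> R \<Longrightarrow> W.eig (of_nat r - 1) (Q x r)" using eQ that by auto
      show "\<And>r. r \<in> R \<Longrightarrow> of_nat r + 1 \<in> set L \<and> of_nat r - 1 \<in> set L" using Lmem by auto
      show "(\<lambda>C. \<Sum>r\<in>R. P x r C - Q x r C) = (\<lambda>C. 0)"
        using h that(1) dirF[OF that(1), of M1] unfolding zero_iff d1 by auto
      show "(\<lambda>C. \<Sum>r\<in>R. -\<i> * (P x r C + Q x r C)) = (\<lambda>C. 0)"
        using h that(1) dirF[OF that(1), of M2] unfolding zero_iff d2 by auto
      show "r \<in> R" by fact
    qed
    show "\<forall>r\<in>R. M_monogenic (4*p) idx M1 \<Omega> (Fc r) \<and> M_monogenic (4*p) idx M2 \<Omega> (Fc r)"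
      unfolding zero_iff d1 d2 using z by auto
  next
    assume h: "\<forall>r\<in>R. M_monogenic (4*p) idx M1 \<Omega> (Fc r) \<and> M_monogenic (4*p) idx M2 \<Omega> (Fc r)"
    show "M_monogenic (4*p) idx M1 \<Omega> F \<and> M_monogenic (4*p) idx M2 \<Omega> F"
      unfolding zero_iff
    proof (intro conjI ballI)
      fix x assume x: "x \<in> \<Omega>"
      show "dirac (4*p) idx M1 F x = (\<lambda>C. 0)" unfolding dirF[OF x]
        using h x unfolding zero_iff by (auto simp: fun_eq_iff intro!: sum.neutral)
      show "dirac (4*p) idx M2 F x = (\<lambda>C. 0)" unfolding dirF[OF x]
        using h x unfolding zero_iff by (auto simp: fun_eq_iff intro!: sum.neutral)
    qed
  qed
  have s1: "(M_monogenic (4*p) idx gen \<Omega> F \<and> M_monogenic (4*p) idx mapI \<Omega> F) \<longleftrightarrow>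
      (\<forall>r\<in>R. M_monogenic (4*p) idx gen \<Omega> (Fc r) \<and> M_monogenic (4*p) idx mapI \<Omega> (Fc r))"
    by (rule split[OF dec1 dec2 eDD(1) eDD(2)])
  have s2: "(M_monogenic (4*p) idx mapJ \<Omega> F \<and> M_monogenic (4*p) idx (mapK (4*p)) \<Omega> F) \<longleftrightarrow>
      (\<forall>r\<in>R. M_monogenic (4*p) idx mapJ \<Omega> (Fc r) \<and> M_monogenic (4*p) idx (mapK (4*p)) \<Omega> (Fc r))"
    by (rule split[OF dec3 dec4 eDJ(1) eDJ(2)])
  have single: "M_monogenic (4*p) idx M1 \<Omega> (Fc r) \<Longrightarrow> M_monogenic (4*p) idx M2 \<Omega> (Fc r)"
    if r: "r \<in> R"
    and d1: "\<And>x. dirac (4*p) idx M1 (Fc r) x = (\<lambda>C. P x C - Q x C)"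
    and d2: "\<And>x. dirac (4*p) idx M2 (Fc r) x = (\<lambda>C. -\<i> * (P x C + Q x C))"
    and eP: "\<And>x. x \<in> \<Omega> \<Longrightarrow> W.eig (of_nat r + 1) (P x)"
    and eQ: "\<And>x. x \<in> \<Omega> \<Longrightarrow> W.eig (of_nat r - 1) (Q x)"
    for M1 M2 P Q r
  proof -
    assume h: "M_monogenic (4*p) idx M1 \<Omega> (Fc r)"
    have "P x = (\<lambda>C. 0) \<and> Q x = (\<lambda>C. 0)" if x: "x \<in> \<Omega>" for x
      using W.single_zero[OF eP[OF x] eQ[OF x] Lmem(2)[OF r] Lmem(3)[OF r]] h x
      unfolding zero_iff d1 by auto
    then show ?thesis unfolding zero_iff d2 by auto
  qed
  have c1: "M_monogenic (4*p) idx gen \<Omega> (Fc r) \<Longrightarrow> M_monogenic (4*p) idx mapI \<Omega> (Fc r)" if "r \<in> R" for r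
    by (rule single[OF that dec1 dec2 eDD(1)[OF that] eDD(2)[OF that]])
  have c2: "M_monogenic (4*p) idx mapJ \<Omega> (Fc r) \<Longrightarrow> M_monogenic (4*p) idx (mapK (4*p)) \<Omega> (Fc r)" if "r \<in> R" for r
    by (rule single[OF that dec3 dec4 eDJ(1)[OF that] eDJ(2)[OF that]])
  have FF: "(\<lambda>x A. \<Sum>r\<le>2*p. Fc r x A) = F" unfolding F_def R_def ..
  have RR: "\<And>P. (\<forall>r\<le>2*p. P r) \<longleftrightarrow> (\<forall>r\<in>R. P r)" by (auto simp: R_def)
  have q1: "q_monogenic p idx \<Omega> F \<longleftrightarrow> (M_monogenic (4*p) idx gen \<Omega> F \<and> M_monogenic (4*p) idx mapI \<Omega> F)
      \<and> (M_monogenic (4*p) idx mapJ \<Omega> F \<and> M_monogenic (4*p) idx (mapK (4*p)) \<Omega> F)"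
    unfolding q_monogenic_def using spF by auto
  have q2: "q_monogenic p idx \<Omega> (Fc r) \<longleftrightarrow> (M_monogenic (4*p) idx gen \<Omega> (Fc r) \<and> M_monogenic (4*p) idx mapI \<Omega> (Fc r))
      \<and> (M_monogenic (4*p) idx mapJ \<Omega> (Fc r) \<and> M_monogenic (4*p) idx (mapK (4*p)) \<Omega> (Fc r))" if "r \<in> R" for r
    unfolding q_monogenic_def using eigF(2)[OF that] by auto
  show ?thesis unfolding FF RR q1 using q2 s1 s2 c1 c2 by blast
qed

end


theorem proposition4:
  fixes p :: nat and idx :: "nat \<Rightarrow> 'n::finite" and \<Omega> :: "(real^'n) set"
    and Fc :: "nat \<Rightarrow> real^'n \<Rightarrow> cl"
  assumes coords: "bij_betw idx {1..4*p} (UNIV :: 'n set)"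
    and region: "open \<Omega>" "connected \<Omega>"
    and comps: "\<forall>r\<le>2*p. \<forall>x\<in>\<Omega>. Fc r x \<in> spinor_r p r"
    and diff: "\<forall>A. (\<lambda>x. \<Sum>r\<le>2*p. Fc r x A) differentiable_on \<Omega>"
  shows "(q_monogenic p idx \<Omega> (\<lambda>x A. \<Sum>r\<le>2*p. Fc r x A)
            \<longleftrightarrow> (\<forall>r\<le>2*p. q_monogenic p idx \<Omega> (Fc r)))
       \<and> ((\<forall>r\<le>2*p. q_monogenic p idx \<Omega> (Fc r))
            \<longleftrightarrow> (\<forall>r\<le>2*p. M_monogenic (4*p) idx gen \<Omega> (Fc r)
                           \<and> M_monogenic (4*p) idx mapJ \<Omega> (Fc r)))"
  proof -
  interpret psetup p .
  show ?thesis by (rule main[OF region(1) comps diff])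
qed

end
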